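(* Let $\mathcal{S}$ be a finite set of road segments and $y_1,\dots,y_N$ (collectively $y_{[N]}$) the routes of $N$ historical trips, each a nonempty set of distinct segments. For each $n$ and $s\in y_n$ one observes $T'_{n,s}=\theta_s+\varepsilon_{n,s}$, where the $\theta_s$ are i.i.d. with mean $\mu$ and variance $\tau^2>0$, independent of the errors; for each $n$ the errors $(\varepsilon_{n,s})_{s\in y_n}$ have mean $0$ and covariances $\sigma_{s,t}$; errors from different trips are independent; and the errors together with $\theta$ are jointly Gaussian. Let $\Psi=[\psi_{s,t}]$ be the precision matrix (inverse of the covariance matrix $[\sigma_{s,t}]_{s,t\in\mathcal{S}}$) of the segment travel times, and $N_{s\cup t}=|\{n: s,t\in y_n\}|$. Then for any route $y$, the optimal estimator $\hat\Theta^\ast_y$ (the one minimizing the integrated risk) satisfies $$R\big(\hat\Theta^\ast_y\mid y_{[N]}\big)\ge\frac{|y|^2}{\sum_{s,t\in y}N_{s\cup t}\psi_{s,t}+|y|/\tau^2}.$$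
   Context: The integrated risk is $R(\hat\Theta_y\mid y_{[N]})=\mathbb{E}[(\hat\Theta_y-\sum_{s\in y}\theta_s)^2\mid y_{[N]}]$, expectation over errors and prior of $\theta$, conditional on the historical routes. For $s=t$, $N_{s\cup s}$ is the number of trips traversing $s$. *)

theory Defs
  imports "HOL-Probability.Probability"
begin

definition gaussian_rv :: "'a measure \<Rightarrow> ('a \<Rightarrow> real) \<Rightarrow> bool" where
  "gaussian_rv M X \<longleftrightarrow> X \<in> borel_measurable M \<and>
     ((\<exists>c. AE x in M. X x = c) \<or>
      (\<exists>m sd. sd > 0 \<and> distributed M lborel X (normal_density m sd)))"

definition jointly_gaussian :: "'a measure \<Rightarrow> 'i set \<Rightarrow> ('i \<Rightarrow> 'a \<Rightarrow> real) \<Rightarrow> bool" where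
  "jointly_gaussian M I X \<longleftrightarrow>
     (\<forall>J c. finite J \<longrightarrow> J \<subseteq> I \<longrightarrow> gaussian_rv M (\<lambda>x. \<Sum>i\<in>J. c i * X i x))"

definition obs_index :: "nat \<Rightarrow> (nat \<Rightarrow> 's set) \<Rightarrow> (nat \<times> 's) set" where
  "obs_index N y = {(n, s). n < N \<and> s \<in> y n}"

definition observations ::
  "nat \<Rightarrow> (nat \<Rightarrow> 's set) \<Rightarrow> ('s \<Rightarrow> 'a \<Rightarrow> real) \<Rightarrow> (nat \<Rightarrow> 's \<Rightarrow> 'a \<Rightarrow> real) \<Rightarrow> 'a \<Rightarrow> (nat \<times> 's \<Rightarrow> real)" where
  "observations N y \<theta> \<epsilon> \<omega> = restrict (\<lambda>(n, s). \<theta> s \<omega> + \<epsilon> n s \<omega>) (obs_index N y)"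

definition estimators :: "nat \<Rightarrow> (nat \<Rightarrow> 's set) \<Rightarrow> ((nat \<times> 's \<Rightarrow> real) \<Rightarrow> real) set" where
  "estimators N y = borel_measurable (PiM (obs_index N y) (\<lambda>_. borel))"

text \<open>Integrated risk E[(hat Theta_r - sum_{s in r} theta_s)^2] (as an extended nonnegative real,
  so that infinite risk is allowed).\<close>
definition integrated_risk ::
  "'a measure \<Rightarrow> nat \<Rightarrow> (nat \<Rightarrow> 's set) \<Rightarrow> ('s \<Rightarrow> 'a \<Rightarrow> real) \<Rightarrow> (nat \<Rightarrow> 's \<Rightarrow> 'a \<Rightarrow> real)
     \<Rightarrow> 's set \<Rightarrow> ((nat \<times> 's \<Rightarrow> real) \<Rightarrow> real) \<Rightarrow> ennreal" where
  "integrated_risk M N y \<theta> \<epsilon> r g =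
     (\<integral>\<^sup>+ \<omega>. ennreal ((g (observations N y \<theta> \<epsilon> \<omega>) - (\<Sum>s\<in>r. \<theta> s \<omega>))\<^sup>2) \<partial>M)"

definition optimal_estimator ::
  "'a measure \<Rightarrow> nat \<Rightarrow> (nat \<Rightarrow> 's set) \<Rightarrow> ('s \<Rightarrow> 'a \<Rightarrow> real) \<Rightarrow> (nat \<Rightarrow> 's \<Rightarrow> 'a \<Rightarrow> real)
     \<Rightarrow> 's set \<Rightarrow> ((nat \<times> 's \<Rightarrow> real) \<Rightarrow> real) \<Rightarrow> bool" where
  "optimal_estimator M N y \<theta> \<epsilon> r g \<longleftrightarrow> g \<in> estimators N y \<and>
     (\<forall>h \<in> estimators N y. integrated_risk M N y \<theta> \<epsilon> r g \<le> integrated_risk M N y \<theta> \<epsilon> r h)"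

definition co_count :: "nat \<Rightarrow> (nat \<Rightarrow> 's set) \<Rightarrow> 's \<Rightarrow> 's \<Rightarrow> nat" where
  "co_count N y s t = card {n. n < N \<and> s \<in> y n \<and> t \<in> y n}"

end

theory Submission
  imports Defs
begin

lemma gaussian_rv_integrable:
  assumes P: "prob_space M" and G: "gaussian_rv M Y"
  shows "integrable M Y" "integrable M (\<lambda>x. (Y x)\<^sup>2)"
proof -
  interpret prob_space M by fact
  have meas: "Y \<in> borel_measurable M" using G by (simp add: gaussian_rv_def)
  have "(\<exists>c. AE x in M. Y x = c) \<or> (\<exists>m sd. sd > 0 \<and> distributed M lborel Y (normal_density m sd))"
    using G by (simp add: gaussian_rv_def)
  hence "integrable M Y \<and> integrable M (\<lambda>x. (Y x)\<^sup>2)"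
  proof
    assume "\<exists>c. AE x in M. Y x = c"
    then obtain c where c: "AE x in M. Y x = c" by blast
    have "integrable M (\<lambda>x. c)" by simp
    hence 1: "integrable M Y" by (rule integrable_cong_AE_imp[OF _ meas]) (use c in auto)
    have "integrable M (\<lambda>x. c\<^sup>2)" by simp
    hence 2: "integrable M (\<lambda>x. (Y x)\<^sup>2)" by (rule integrable_cong_AE_imp) (use c meas in auto)
    show ?thesis using 1 2 by simp
  next
    assume "\<exists>m sd. sd > 0 \<and> distributed M lborel Y (normal_density m sd)"
    then obtain m sd where sd: "sd > 0" and D: "distributed M lborel Y (normal_density m sd)" by blast
    have i1: "integrable lborel (\<lambda>x. normal_density m sd x * x)"
      using integrable_normal_moment_nz_1[OF sd] .
    have "integrable M (\<lambda>x. Y x)"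
      using distributed_integrable[OF D, of "\<lambda>x. x"] i1 by simp
    moreover have "integrable lborel (\<lambda>x. normal_density m sd x * (x - m)^2)"
      using integrable_normal_moment[OF sd, of m 2] by simp
    hence "integrable M (\<lambda>x. (Y x - m)^2)"
      using distributed_integrable[OF D, of "\<lambda>x. (x - m)^2"] by simp
    ultimately have "integrable M (\<lambda>x. (Y x - m)^2 + 2 * m * Y x - m^2)" by auto
    moreover have "(\<lambda>x. (Y x - m)^2 + 2 * m * Y x - m^2) = (\<lambda>x. (Y x)\<^sup>2)"
      by (auto simp: power2_eq_square algebra_simps)
    ultimately show ?thesis using \<open>integrable M (\<lambda>x. Y x)\<close> by simp
  qed
  thus "integrable M Y" "integrable M (\<lambda>x. (Y x)\<^sup>2)" by auto
qed

lemma gaussian_rv_char: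
  assumes P: "prob_space M" and G: "gaussian_rv M Y"
  shows "(CLINT x|M. iexp (Y x)) = iexp (prob_space.expectation M Y) *
      complex_of_real (exp (- prob_space.variance M Y / 2))"
proof -
  interpret prob_space M by fact
  have meas: "Y \<in> borel_measurable M" using G by (simp add: gaussian_rv_def)
  have "(\<exists>c. AE x in M. Y x = c) \<or> (\<exists>m sd. sd > 0 \<and> distributed M lborel Y (normal_density m sd))"
    using G by (simp add: gaussian_rv_def)
  thus ?thesis
  proof
    assume "\<exists>c. AE x in M. Y x = c"
    then obtain c where c: "AE x in M. Y x = c" by blast
    have e: "expectation Y = c" using integral_cong_AE[of Y M "\<lambda>_. c"] c meas by (simp add: prob_space)
    have "variance Y = (\<integral>x. 0 \<partial>M)"
      by (rule integral_cong_AE) (use c meas e in auto)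
    hence v: "variance Y = 0" by simp
    have "(CLINT x|M. iexp (Y x)) = (CLINT x|M. iexp c)"
      by (rule integral_cong_AE) (use c meas in auto)
    thus ?thesis using e v by (simp add: prob_space)
  next
    assume "\<exists>m sd. sd > 0 \<and> distributed M lborel Y (normal_density m sd)"
    then obtain m sd where sd: "sd > 0" and D: "distributed M lborel Y (normal_density m sd)" by blast
    have e: "expectation Y = m" using normal_distributed_expectation[OF sd D] .
    have v: "variance Y = sd^2" using normal_distributed_variance[OF sd D] .
    define Z where "Z x = (Y x - m) / sd" for x
    have DZ: "distributed M lborel Z std_normal_density"
      using normal_standard_normal_convert[OF sd, of Y m] D by (simp add: Z_def[abs_def])
    have Zm: "Z \<in> borel_measurable M" using meas by (simp add: Z_def[abs_def])
    have "distr M borel Z = distr M lborel Z" by (rule distr_cong) auto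
    also have "\<dots> = std_normal_distribution" using DZ by (simp add: distributed_def)
    finally have dZ: "distr M borel Z = std_normal_distribution" .
    have "char std_normal_distribution sd = (CLINT x|M. iexp (sd * Z x))"
      unfolding dZ[symmetric] char_def by (subst integral_distr) (use Zm in auto)
    hence c1: "(CLINT x|M. iexp (sd * Z x)) = exp (- (sd^2) / 2)"
      by (simp add: char_std_normal_distribution)
    have "(CLINT x|M. iexp (Y x)) = (CLINT x|M. iexp m * iexp (sd * Z x))"
    proof (intro Bochner_Integration.integral_cong refl)
      fix x have "Y x = m + sd * Z x" using sd by (simp add: Z_def)
      hence "iexp (Y x) = iexp (m + sd * Z x)" by simp
      also have "\<dots> = iexp m * iexp (sd * Z x)" by (simp add: exp_add[symmetric] algebra_simps)
      finally show "iexp (Y x) = iexp m * iexp (sd * Z x)" .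
    qed
    also have "\<dots> = iexp m * (CLINT x|M. iexp (sd * Z x))" by simp
    finally show ?thesis using c1 e v by simp
  qed
qed

lemma weight_vanish:
  fixes V :: "'a \<Rightarrow> real" and F :: "'a \<Rightarrow> 'b" and Test :: "('b \<Rightarrow> complex) set"
  assumes P: "prob_space M" and Vm: "V \<in> borel_measurable M" and Vi: "integrable M V"
    and V0: "(\<integral>\<omega>. V \<omega> \<partial>M) = 0"
    and Fm: "F \<in> measurable M N"
    and Tm: "\<And>f. f \<in> Test \<Longrightarrow> f \<in> borel_measurable N"
    and Tb: "\<And>f x. f \<in> Test \<Longrightarrow> norm (f x) \<le> 1"
    and T0: "\<And>f. f \<in> Test \<Longrightarrow> (CLINT \<omega>|M. complex_of_real (V \<omega>) * f (F \<omega>)) = 0"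
    and uniq: "\<And>\<mu>1 \<mu>2. prob_space \<mu>1 \<Longrightarrow> prob_space \<mu>2 \<Longrightarrow> sets \<mu>1 = sets N \<Longrightarrow> sets \<mu>2 = sets N
        \<Longrightarrow> (\<And>f. f \<in> Test \<Longrightarrow> (CLINT x|\<mu>1. f x) = (CLINT x|\<mu>2. f x)) \<Longrightarrow> \<mu>1 = \<mu>2"
    and hm: "h \<in> borel_measurable N" and hb: "\<And>x. \<bar>h x\<bar> \<le> B"
  shows "(\<integral>\<omega>. V \<omega> * h (F \<omega>) \<partial>M) = 0"
proof -
  interpret prob_space M by fact
  define Vp where "Vp \<omega> = max 0 (V \<omega>)" for \<omega>
  define Vn where "Vn \<omega> = max 0 (- V \<omega>)" for \<omega>
  have Vpm[measurable]: "Vp \<in> borel_measurable M" and Vnm[measurable]: "Vn \<in> borel_measurable M"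
    using Vm by (auto simp: Vp_def[abs_def] Vn_def[abs_def])
  have Vpi: "integrable M Vp" unfolding Vp_def using Vi by auto
  have Vni: "integrable M Vn" unfolding Vn_def using Vi by auto
  have Vsplit: "\<And>\<omega>. V \<omega> = Vp \<omega> - Vn \<omega>" by (auto simp: Vp_def Vn_def)
  have Vpn: "\<And>\<omega>. Vp \<omega> \<ge> 0" "\<And>\<omega>. Vn \<omega> \<ge> 0" by (auto simp: Vp_def Vn_def)
  have hF[measurable]: "(\<lambda>\<omega>. h (F \<omega>)) \<in> borel_measurable M" using hm Fm by measurable
  have "(\<integral>\<omega>. V \<omega> \<partial>M) = (\<integral>\<omega>. Vp \<omega> \<partial>M) - (\<integral>\<omega>. Vn \<omega> \<partial>M)"
    unfolding Vsplit using Vpi Vni by simp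
  hence ceq: "(\<integral>\<omega>. Vp \<omega> \<partial>M) = (\<integral>\<omega>. Vn \<omega> \<partial>M)" using V0 by simp
  define c where "c = (\<integral>\<omega>. Vp \<omega> \<partial>M)"
  have c0: "c \<ge> 0" unfolding c_def using Vpn by simp
  have inth: "\<And>W. integrable M W \<Longrightarrow> integrable M (\<lambda>\<omega>. W \<omega> * h (F \<omega>))"
  proof -
    fix W :: "'a \<Rightarrow> real" assume W: "integrable M W"
    have b: "\<And>x. \<bar>W x\<bar> * \<bar>h (F x)\<bar> \<le> \<bar>B\<bar> * \<bar>W x\<bar>"
    proof -
      fix x have "\<bar>h (F x)\<bar> \<le> \<bar>B\<bar>" using hb[of "F x"] by linarith
      thus "\<bar>W x\<bar> * \<bar>h (F x)\<bar> \<le> \<bar>B\<bar> * \<bar>W x\<bar>"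
        by (metis abs_ge_zero mult.commute mult_left_mono)
    qed
    show "integrable M (\<lambda>\<omega>. W \<omega> * h (F \<omega>))"
      by (rule Bochner_Integration.integrable_bound[of _ "\<lambda>\<omega>. B * W \<omega>"])
         (use W b in \<open>auto simp: abs_mult intro!: AE_I2\<close>)
  qed
  show ?thesis
  proof (cases "c = 0")
    case True
    have "AE \<omega> in M. Vp \<omega> = 0" using True Vpi Vpn integral_nonneg_eq_0_iff_AE[of M Vp] by (simp add: c_def)
    moreover have "AE \<omega> in M. Vn \<omega> = 0" using True ceq Vni Vpn integral_nonneg_eq_0_iff_AE[of M Vn] by (simp add: c_def)
    ultimately have "AE \<omega> in M. V \<omega> * h (F \<omega>) = 0" by eventually_elim (simp add: Vsplit)
    hence "(\<integral>\<omega>. V \<omega> * h (F \<omega>) \<partial>M) = (\<integral>\<omega>. 0 \<partial>M)"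
      by (intro integral_cong_AE) (use Vm hF in auto)
    thus ?thesis by simp
  next
    case False
    hence cpos: "c > 0" using c0 by simp
    define mp where "mp = distr (density M (\<lambda>\<omega>. ennreal (Vp \<omega> / c))) N F"
    define mn where "mn = distr (density M (\<lambda>\<omega>. ennreal (Vn \<omega> / c))) N F"
    have dens_prob: "prob_space (density M (\<lambda>\<omega>. ennreal (W \<omega> / c)))"
      if W: "integrable M W" "\<And>\<omega>. W \<omega> \<ge> 0" "(\<integral>\<omega>. W \<omega> \<partial>M) = c" for W :: "'a \<Rightarrow> real"
    proof (rule prob_spaceI)
      have "emeasure (density M (\<lambda>\<omega>. ennreal (W \<omega> / c))) (space (density M (\<lambda>\<omega>. ennreal (W \<omega> / c))))
          = (\<integral>\<^sup>+\<omega>. ennreal (W \<omega> / c) \<partial>M)"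
        using W by (simp add: emeasure_density nn_integral_density cong: nn_integral_cong)
      also have "\<dots> = ennreal (\<integral>\<omega>. W \<omega> / c \<partial>M)"
        by (rule nn_integral_eq_integral) (use W cpos in auto)
      also have "\<dots> = 1" using W cpos by simp
      finally show "emeasure (density M (\<lambda>\<omega>. ennreal (W \<omega> / c))) (space (density M (\<lambda>\<omega>. ennreal (W \<omega> / c)))) = 1" .
    qed
    have Wmeas: "(\<lambda>\<omega>. W \<omega> / c) \<in> borel_measurable M" if "integrable M W" for W :: "'a \<Rightarrow> real"
      using that by auto
    have pp: "prob_space mp" unfolding mp_def
      by (rule prob_space.prob_space_distr[OF dens_prob[of Vp]]) (use Vpi Vpn Fm in \<open>auto simp: c_def\<close>)
    have pn: "prob_space mn" unfolding mn_def
      by (rule prob_space.prob_space_distr[OF dens_prob[of Vn]]) (use Vni Vpn Fm ceq in \<open>auto simp: c_def\<close>)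
    have int_dens: "(\<integral>x. g x \<partial>distr (density M (\<lambda>\<omega>. ennreal (W \<omega> / c))) N F)
        = (\<integral>\<omega>. (W \<omega> / c) *\<^sub>R g (F \<omega>) \<partial>M)"
      if W: "W \<in> borel_measurable M" "\<And>\<omega>. W \<omega> \<ge> 0" and g: "g \<in> borel_measurable N"
      for W :: "'a \<Rightarrow> real" and g :: "'b \<Rightarrow> 'c::{banach, second_countable_topology}"
    proof -
      have "(\<integral>x. g x \<partial>distr (density M (\<lambda>\<omega>. ennreal (W \<omega> / c))) N F)
          = (\<integral>\<omega>. g (F \<omega>) \<partial>density M (\<lambda>\<omega>. ennreal (W \<omega> / c)))"
        by (rule integral_distr) (use Fm g in auto)
      also have "\<dots> = (\<integral>\<omega>. (W \<omega> / c) *\<^sub>R g (F \<omega>) \<partial>M)"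
        by (rule integral_density) (use W g Fm cpos in auto)
      finally show ?thesis .
    qed
    have "mp = mn"
    proof (rule uniq[OF pp pn])
      show "sets mp = sets N" "sets mn = sets N" by (simp_all add: mp_def mn_def)
      fix f assume f: "f \<in> Test"
      have fm[measurable]: "f \<in> borel_measurable N" using Tm f .
      have intf: "integrable M (\<lambda>\<omega>. (W \<omega> / c) *\<^sub>R f (F \<omega>))" if "integrable M W" for W :: "'a \<Rightarrow> real"
        by (rule Bochner_Integration.integrable_bound[of _ "\<lambda>\<omega>. W \<omega> / c"])
           (use that Tb[OF f] Fm in \<open>auto simp: abs_mult intro!: AE_I2 divide_right_mono mult_left_le\<close>)
      have "(CLINT x|mp. f x) - (CLINT x|mn. f x)
          = (CLINT \<omega>|M. (Vp \<omega> / c) *\<^sub>R f (F \<omega>)) - (CLINT \<omega>|M. (Vn \<omega> / c) *\<^sub>R f (F \<omega>))"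
        unfolding mp_def mn_def using Vpn by (simp add: int_dens)
      also have "\<dots> = (CLINT \<omega>|M. (Vp \<omega> / c) *\<^sub>R f (F \<omega>) - (Vn \<omega> / c) *\<^sub>R f (F \<omega>))"
        by (rule Bochner_Integration.integral_diff[symmetric]) (use intf Vpi Vni in auto)
      also have "\<dots> = (CLINT \<omega>|M. complex_of_real (V \<omega>) * f (F \<omega>) / c)"
        by (rule Bochner_Integration.integral_cong) (auto simp: Vsplit scaleR_conv_of_real diff_divide_distrib left_diff_distrib)
      also have "\<dots> = 0" using T0[OF f] by simp
      finally show "(CLINT x|mp. f x) = (CLINT x|mn. f x)" by simp
    qed
    hence "(\<integral>x. h x \<partial>mp) = (\<integral>x. h x \<partial>mn)" by simp
    hence "(\<integral>\<omega>. (Vp \<omega> / c) * h (F \<omega>) \<partial>M) = (\<integral>\<omega>. (Vn \<omega> / c) * h (F \<omega>) \<partial>M)"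
      unfolding mp_def mn_def using Vpn hm by (simp add: int_dens)
    hence "(\<integral>\<omega>. Vp \<omega> * h (F \<omega>) \<partial>M) / c = (\<integral>\<omega>. Vn \<omega> * h (F \<omega>) \<partial>M) / c"
      by (simp add: field_simps)
    hence e: "(\<integral>\<omega>. Vp \<omega> * h (F \<omega>) \<partial>M) = (\<integral>\<omega>. Vn \<omega> * h (F \<omega>) \<partial>M)" using cpos by simp
    have "(\<integral>\<omega>. V \<omega> * h (F \<omega>) \<partial>M) = (\<integral>\<omega>. Vp \<omega> * h (F \<omega>) - Vn \<omega> * h (F \<omega>) \<partial>M)"
      by (simp add: Vsplit left_diff_distrib)
    also have "\<dots> = 0" using e inth[OF Vpi] inth[OF Vni] by simp
    finally show ?thesis .
  qed
qed

lemma fourier_1d_real: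
  fixes V :: "'a \<Rightarrow> real"
  assumes P: "prob_space M" and Vm: "V \<in> borel_measurable M" and Vi: "integrable M V"
    and Xm: "X \<in> borel_measurable M"
    and ch: "\<And>t. (CLINT \<omega>|M. complex_of_real (V \<omega>) * iexp (t * X \<omega>)) = 0"
    and A: "A \<in> sets borel"
  shows "(\<integral>\<omega>. V \<omega> * indicator A (X \<omega>) \<partial>M) = 0"
proof (rule weight_vanish[OF P Vm Vi _ Xm, where Test = "range (\<lambda>t x. iexp (t * x))" and B = 1])
  show "(\<integral>\<omega>. V \<omega> \<partial>M) = 0" using ch[of 0] by simp
  show "\<And>f. f \<in> range (\<lambda>t x. iexp (t * x)) \<Longrightarrow> f \<in> borel_measurable borel" by auto
  show "\<And>f x. f \<in> range (\<lambda>t x. iexp (t * x)) \<Longrightarrow> cmod (f x) \<le> 1" by (auto simp: norm_exp_i_times)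
  show "\<And>f. f \<in> range (\<lambda>t x. iexp (t * x)) \<Longrightarrow> (CLINT \<omega>|M. complex_of_real (V \<omega>) * f (X \<omega>)) = 0"
    using ch by auto
  show "indicator A \<in> borel_measurable borel" using A by simp
  show "\<And>x. \<bar>indicator A x :: real\<bar> \<le> 1" by (simp split: split_indicator)
  fix \<mu>1 \<mu>2 :: "real measure"
  assume p1: "prob_space \<mu>1" and p2: "prob_space \<mu>2" and s1: "sets \<mu>1 = sets borel" and s2: "sets \<mu>2 = sets borel"
    and eq: "\<And>f. f \<in> range (\<lambda>t x. iexp (t * x)) \<Longrightarrow> (CLINT x|\<mu>1. f x) = (CLINT x|\<mu>2. f x)"
  have r1: "real_distribution \<mu>1" using p1 s1 by (simp add: real_distribution_def real_distribution_axioms_def)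
  have r2: "real_distribution \<mu>2" using p2 s2 by (simp add: real_distribution_def real_distribution_axioms_def)
  have "char \<mu>1 = char \<mu>2" unfolding char_def using eq by auto
  thus "\<mu>1 = \<mu>2" using Levy_uniqueness[OF r1 r2] by simp
qed

lemma fourier_1d:
  fixes W :: "'a \<Rightarrow> complex"
  assumes P: "prob_space M" and Wm: "W \<in> borel_measurable M" and Wi: "integrable M W"
    and Xm: "X \<in> borel_measurable M"
    and ch: "\<And>t. (CLINT \<omega>|M. W \<omega> * iexp (t * X \<omega>)) = 0"
    and A: "A \<in> sets borel"
  shows "(CLINT \<omega>|M. W \<omega> * indicator A (X \<omega>)) = 0"
proof -
  have ei[measurable]: "(\<lambda>\<omega>. iexp (t * X \<omega>)) \<in> borel_measurable M" for t using Xm by measurable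
  have inte: "integrable M (\<lambda>\<omega>. U \<omega> * iexp (t * X \<omega>))" if U: "integrable M U" for U :: "'a \<Rightarrow> complex" and t
  proof (rule Bochner_Integration.integrable_bound[OF U])
    show "(\<lambda>\<omega>. U \<omega> * iexp (t * X \<omega>)) \<in> borel_measurable M"
      using borel_measurable_integrable[OF U] ei[of t] by (rule borel_measurable_times)
  qed (auto simp: norm_mult norm_exp_i_times)
  have cnjW: "(CLINT \<omega>|M. cnj (W \<omega>) * iexp (t * X \<omega>)) = 0" for t
  proof -
    have "(CLINT \<omega>|M. cnj (W \<omega>) * iexp (t * X \<omega>)) = (CLINT \<omega>|M. cnj (W \<omega> * iexp ((-t) * X \<omega>)))"
      by (rule Bochner_Integration.integral_cong) (auto simp: exp_cnj)
    also have "\<dots> = cnj (CLINT \<omega>|M. W \<omega> * iexp ((-t) * X \<omega>))" by (rule Bochner_Integration.integral_cnj)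
    also have "\<dots> = 0" using ch[of "-t"] by simp
    finally show ?thesis .
  qed
  have cW: "integrable M (\<lambda>\<omega>. cnj (W \<omega>))" using Wi by simp
  have reE: "complex_of_real (Re w) * e = (w * e + cnj w * e) / 2" for w e
    by (simp add: complex_eq_iff field_simps)
  have imE: "complex_of_real (Im w) * e = (w * e - cnj w * e) / (2 * \<i>)" for w e
    by (subst left_diff_distrib[symmetric], subst complex_diff_cnj) (simp add: field_simps)
  have reW: "(CLINT \<omega>|M. complex_of_real (Re (W \<omega>)) * iexp (t * X \<omega>)) = 0" for t
  proof -
    have "(CLINT \<omega>|M. complex_of_real (Re (W \<omega>)) * iexp (t * X \<omega>))
        = (CLINT \<omega>|M. (W \<omega> * iexp (t * X \<omega>) + cnj (W \<omega>) * iexp (t * X \<omega>)) / 2)"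
      by (rule Bochner_Integration.integral_cong) (auto simp: reE distrib_right add_divide_distrib)
    also have "\<dots> = ((CLINT \<omega>|M. W \<omega> * iexp (t * X \<omega>)) + (CLINT \<omega>|M. cnj (W \<omega>) * iexp (t * X \<omega>))) / 2"
      using inte[OF Wi, of t] inte[OF cW, of t] by simp
    also have "\<dots> = 0" using ch[of t] cnjW[of t] by simp
    finally show ?thesis .
  qed
  have imW: "(CLINT \<omega>|M. complex_of_real (Im (W \<omega>)) * iexp (t * X \<omega>)) = 0" for t
  proof -
    have "(CLINT \<omega>|M. complex_of_real (Im (W \<omega>)) * iexp (t * X \<omega>))
        = (CLINT \<omega>|M. (W \<omega> * iexp (t * X \<omega>) - cnj (W \<omega>) * iexp (t * X \<omega>)) / (2 * \<i>))"
      by (rule Bochner_Integration.integral_cong) (auto simp: imE left_diff_distrib diff_divide_distrib)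
    also have "\<dots> = ((CLINT \<omega>|M. W \<omega> * iexp (t * X \<omega>)) - (CLINT \<omega>|M. cnj (W \<omega>) * iexp (t * X \<omega>))) / (2 * \<i>)"
      using inte[OF Wi, of t] inte[OF cW, of t] by simp
    also have "\<dots> = 0" using ch[of t] cnjW[of t] by simp
    finally show ?thesis .
  qed
  have r: "(\<integral>\<omega>. Re (W \<omega>) * indicator A (X \<omega>) \<partial>M) = 0"
    by (rule fourier_1d_real[OF P _ _ Xm reW A]) (use Wm Wi in auto)
  have i: "(\<integral>\<omega>. Im (W \<omega>) * indicator A (X \<omega>) \<partial>M) = 0"
    by (rule fourier_1d_real[OF P _ _ Xm imW A]) (use Wm Wi in auto)
  have im: "(\<lambda>\<omega>. indicator A (X \<omega>) :: real) \<in> borel_measurable M" using A Xm by measurable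
  have int2: "integrable M (\<lambda>\<omega>. U \<omega> * indicator A (X \<omega>))" if U: "integrable M U" for U :: "'a \<Rightarrow> real"
    by (rule Bochner_Integration.integrable_bound[OF U]) (use U im in \<open>auto simp: split: split_indicator\<close>)
  define a where "a = (\<lambda>\<omega>. Re (W \<omega>) * indicator A (X \<omega>) :: real)"
  define b where "b = (\<lambda>\<omega>. Im (W \<omega>) * indicator A (X \<omega>) :: real)"
  have ia: "integrable M a" unfolding a_def using int2[of "\<lambda>\<omega>. Re (W \<omega>)"] Wi by simp
  have ib: "integrable M b" unfolding b_def using int2[of "\<lambda>\<omega>. Im (W \<omega>)"] Wi by simp
  have "(CLINT \<omega>|M. W \<omega> * indicator A (X \<omega>))
      = (CLINT \<omega>|M. complex_of_real (a \<omega>) + \<i> * complex_of_real (b \<omega>))"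
    by (rule Bochner_Integration.integral_cong) (auto simp: a_def b_def complex_eq_iff split: split_indicator)
  also have "\<dots> = (CLINT \<omega>|M. complex_of_real (a \<omega>)) + (CLINT \<omega>|M. \<i> * complex_of_real (b \<omega>))"
    by (rule Bochner_Integration.integral_add) (use ia ib in auto)
  also have "\<dots> = complex_of_real (integral\<^sup>L M a) + \<i> * complex_of_real (integral\<^sup>L M b)"
    by simp
  also have "\<dots> = 0" using r i by (simp add: a_def b_def)
  finally show ?thesis .
qed

lemma indicator_PiE_restrict:
  assumes "finite K"
  shows "indicator (Pi\<^sub>E K A) (\<lambda>k\<in>K. f k) = (\<Prod>k\<in>K. indicator (A k) (f k) :: real)"
proof (cases "\<forall>k\<in>K. f k \<in> A k")
  case True thus ?thesis by (auto simp: indicator_def PiE_def)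
next
  case False
  then obtain k where k: "k \<in> K" "f k \<notin> A k" by blast
  hence "(\<Prod>k\<in>K. indicator (A k) (f k) :: real) = 0"
    using assms by (auto intro!: prod_zero bexI[of _ k])
  moreover have "(\<lambda>k\<in>K. f k) \<notin> Pi\<^sub>E K A" using k by auto
  ultimately show ?thesis by simp
qed

lemma iexp_add: "iexp (x + y) = iexp x * iexp y"
  by (simp add: distrib_left exp_add)

lemma fourier_multi:
  fixes D :: "'a \<Rightarrow> real" and T :: "'k \<Rightarrow> 'a \<Rightarrow> real"
  assumes P: "prob_space M" and finK: "finite K"
    and Dm: "D \<in> borel_measurable M" and Di: "integrable M D"
    and Tm: "\<And>k. k \<in> K \<Longrightarrow> T k \<in> borel_measurable M"
    and ch: "\<And>u. (CLINT \<omega>|M. complex_of_real (D \<omega>) * iexp (\<Sum>k\<in>K. u k * T k \<omega>)) = 0"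
    and hm: "h \<in> borel_measurable (PiM K (\<lambda>_. borel))" and hb: "\<And>x. \<bar>h x\<bar> \<le> B"
  shows "(\<integral>\<omega>. D \<omega> * h (\<lambda>k\<in>K. T k \<omega>) \<partial>M) = 0"
proof -
  interpret prob_space M by fact
  have indm: "(\<lambda>\<omega>. indicator A (T k \<omega>) :: real) \<in> borel_measurable M" if "k \<in> K" "A \<in> sets borel" for k A
    using measurable_compose[OF Tm[OF that(1)] borel_measurable_indicator[OF that(2)]] by (simp add: comp_def)
  have prodm: "(\<lambda>\<omega>. \<Prod>j\<in>J. indicator (A j) (T j \<omega>) :: real) \<in> borel_measurable M"
    if "J \<subseteq> K" "\<forall>j\<in>J. A j \<in> sets borel" for J A
    by (rule borel_measurable_prod) (use that indm in auto)
  have prodb: "\<bar>\<Prod>j\<in>J. indicator (A j) (x j) :: real\<bar> \<le> 1" for J A x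
    by (cases "finite J") (auto simp: abs_prod intro!: prod_le_1)
  have summ: "(\<lambda>\<omega>. \<Sum>k\<in>J. u k * T k \<omega>) \<in> borel_measurable M" if "J \<subseteq> K" for J u
    by (rule borel_measurable_sum) (use that Tm in auto)
  have ind: "\<forall>A u. (\<forall>j\<in>J. A j \<in> sets borel) \<longrightarrow>
     (CLINT \<omega>|M. complex_of_real (D \<omega> * (\<Prod>j\<in>J. indicator (A j) (T j \<omega>))) * iexp (\<Sum>k\<in>K-J. u k * T k \<omega>)) = 0"
    if "finite J" "J \<subseteq> K" for J
    using that
  proof (induct J rule: finite_induct)
    case empty
    then show ?case using ch by simp
  next
    case (insert a J)
    show ?case
    proof (intro allI impI)
      fix A :: "'k \<Rightarrow> real set" and u :: "'k \<Rightarrow> real" assume A: "\<forall>j\<in>insert a J. A j \<in> sets borel"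
      have aK: "a \<in> K" and JK: "J \<subseteq> K" using insert by auto
      define W where "W \<omega> = complex_of_real (D \<omega> * (\<Prod>j\<in>J. indicator (A j) (T j \<omega>))) * iexp (\<Sum>k\<in>K - insert a J. u k * T k \<omega>)" for \<omega>
      have m1: "(\<lambda>\<omega>. D \<omega> * (\<Prod>j\<in>J. indicator (A j) (T j \<omega>))) \<in> borel_measurable M"
        using Dm prodm[OF JK, of A] A by (intro borel_measurable_times) auto
      have m2: "(\<lambda>\<omega>. \<Sum>k\<in>K - insert a J. u k * T k \<omega>) \<in> borel_measurable M"
        using summ[of "K - insert a J" u] by auto
      have m1': "(\<lambda>\<omega>. complex_of_real (D \<omega> * (\<Prod>j\<in>J. indicator (A j) (T j \<omega>)))) \<in> borel_measurable M"
        by (rule measurable_compose[OF m1 borel_measurable_of_real])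
      have m2': "(\<lambda>\<omega>. iexp (\<Sum>k\<in>K - insert a J. u k * T k \<omega>)) \<in> borel_measurable M"
        using measurable_compose[OF m2, where g = "\<lambda>x. iexp x" and L = borel] by simp
      have Wm: "W \<in> borel_measurable M" unfolding W_def
        using m1' m2' by (rule borel_measurable_times)
      have Wi: "integrable M W"
      proof (rule Bochner_Integration.integrable_bound[OF Di Wm])
        show "AE x in M. norm (W x) \<le> norm (D x)"
        proof (intro AE_I2)
          fix x
          have "norm (W x) = \<bar>D x\<bar> * \<bar>\<Prod>j\<in>J. indicator (A j) (T j x) :: real\<bar>"
            by (simp only: W_def norm_mult norm_of_real norm_exp_i_times abs_mult mult_1_right)
          also have "\<dots> \<le> \<bar>D x\<bar> * 1" by (rule mult_left_mono[OF prodb]) simp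
          finally show "norm (W x) \<le> norm (D x)" by simp
        qed
      qed
      have chW: "(CLINT \<omega>|M. W \<omega> * iexp (t * T a \<omega>)) = 0" for t
      proof -
        have KJ: "K - J = insert a (K - insert a J)" using aK insert(2) by auto
        have s: "(\<Sum>k\<in>K-J. (u(a:=t)) k * T k \<omega>) = t * T a \<omega> + (\<Sum>k\<in>K - insert a J. u k * T k \<omega>)" for \<omega>
          unfolding KJ using finK by (subst sum.insert) (auto intro!: sum.cong)
        have "(CLINT \<omega>|M. W \<omega> * iexp (t * T a \<omega>)) =
            (CLINT \<omega>|M. complex_of_real (D \<omega> * (\<Prod>j\<in>J. indicator (A j) (T j \<omega>))) * iexp (\<Sum>k\<in>K-J. (u(a:=t)) k * T k \<omega>))"
        proof (rule Bochner_Integration.integral_cong[OF refl])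
          fix \<omega>
          show "W \<omega> * iexp (t * T a \<omega>) = complex_of_real (D \<omega> * (\<Prod>j\<in>J. indicator (A j) (T j \<omega>))) * iexp (\<Sum>k\<in>K-J. (u(a:=t)) k * T k \<omega>)"
            unfolding W_def s iexp_add by (simp only: mult_ac)
        qed
        also have "\<dots> = 0" using insert(3)[OF JK, rule_format, of A "u(a:=t)"] A by simp
        finally show ?thesis .
      qed
      have "(CLINT \<omega>|M. W \<omega> * indicator (A a) (T a \<omega>)) = 0"
        by (rule fourier_1d[OF P Wm Wi Tm[OF aK] chW]) (use A in auto)
      moreover have "(CLINT \<omega>|M. W \<omega> * indicator (A a) (T a \<omega>)) =
        (CLINT \<omega>|M. complex_of_real (D \<omega> * (\<Prod>j\<in>insert a J. indicator (A j) (T j \<omega>))) * iexp (\<Sum>k\<in>K - insert a J. u k * T k \<omega>))"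
      proof (rule Bochner_Integration.integral_cong[OF refl])
        fix \<omega>
        have i1: "(indicator (A a) (T a \<omega>) :: complex) = complex_of_real (indicator (A a) (T a \<omega>))"
          by (simp split: split_indicator)
        have i2: "(\<Prod>j\<in>insert a J. indicator (A j) (T j \<omega>) :: real) = indicator (A a) (T a \<omega>) * (\<Prod>j\<in>J. indicator (A j) (T j \<omega>))"
          using insert(1,2) by simp
        show "W \<omega> * indicator (A a) (T a \<omega>) = complex_of_real (D \<omega> * (\<Prod>j\<in>insert a J. indicator (A j) (T j \<omega>))) * iexp (\<Sum>k\<in>K - insert a J. u k * T k \<omega>)"
          unfolding W_def i1 i2 of_real_mult by (simp only: mult_ac)
      qed
      ultimately show "(CLINT \<omega>|M. complex_of_real (D \<omega> * (\<Prod>j\<in>insert a J. indicator (A j) (T j \<omega>))) * iexp (\<Sum>k\<in>K - insert a J. u k * T k \<omega>)) = 0"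
        by simp
    qed
  qed
  have box: "(\<integral>\<omega>. D \<omega> * (\<Prod>k\<in>K. indicator (A k) (T k \<omega>)) \<partial>M) = 0"
    if A: "\<forall>k\<in>K. A k \<in> sets borel" for A
  proof -
    have "(CLINT \<omega>|M. complex_of_real (D \<omega> * (\<Prod>j\<in>K. indicator (A j) (T j \<omega>))) * iexp (\<Sum>k\<in>K-K. 0 * T k \<omega>)) = 0"
      using ind[OF finK order_refl, rule_format, of A "\<lambda>_. 0"] A by simp
    hence "(CLINT \<omega>|M. complex_of_real (D \<omega> * (\<Prod>j\<in>K. indicator (A j) (T j \<omega>)))) = 0"
      by (simp only: Diff_cancel sum.empty of_real_0 mult_zero_right exp_zero mult_1_right)
    hence "complex_of_real (\<integral>\<omega>. D \<omega> * (\<Prod>j\<in>K. indicator (A j) (T j \<omega>)) \<partial>M) = 0"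
      by (simp only: integral_complex_of_real)
    thus ?thesis by simp
  qed
  define F where "F \<omega> = (\<lambda>k\<in>K. T k \<omega>)" for \<omega>
  have Fm: "F \<in> measurable M (PiM K (\<lambda>_. borel))" unfolding F_def
    by (rule measurable_restrict) (use Tm in auto)
  let ?Test = "{(\<lambda>x. complex_of_real (indicator (Pi\<^sub>E K (A :: 'k \<Rightarrow> real set)) x)) | A. \<forall>k\<in>K. A k \<in> sets borel}"
  have "(\<integral>\<omega>. D \<omega> * h (F \<omega>) \<partial>M) = 0"
  proof (rule weight_vanish[OF P Dm Di _ Fm, where Test = ?Test, OF _ _ _ _ _ hm hb])
    show "(\<integral>\<omega>. D \<omega> \<partial>M) = 0" using box[of "\<lambda>_. UNIV"] by simp
    show "\<And>f. f \<in> ?Test \<Longrightarrow> f \<in> borel_measurable (PiM K (\<lambda>_. borel))"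
    proof -
      fix f assume "f \<in> ?Test"
      then obtain A where f: "f = (\<lambda>x. complex_of_real (indicator (Pi\<^sub>E K A) x))" and A: "\<forall>k\<in>K. A k \<in> sets borel" by blast
      have "Pi\<^sub>E K A \<in> sets (PiM K (\<lambda>_. borel))" by (rule sets_PiM_I_finite[OF finK]) (use A in auto)
      thus "f \<in> borel_measurable (PiM K (\<lambda>_. borel))" unfolding f by measurable
    qed
    show "\<And>f x. f \<in> ?Test \<Longrightarrow> cmod (f x) \<le> 1" by (auto split: split_indicator)
    show "\<And>f. f \<in> ?Test \<Longrightarrow> (CLINT \<omega>|M. complex_of_real (D \<omega>) * f (F \<omega>)) = 0"
    proof -
      fix f assume "f \<in> ?Test"
      then obtain A where f: "f = (\<lambda>x. complex_of_real (indicator (Pi\<^sub>E K A) x))" and A: "\<forall>k\<in>K. A k \<in> sets borel" by blast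
      have "(CLINT \<omega>|M. complex_of_real (D \<omega>) * f (F \<omega>)) = (CLINT \<omega>|M. complex_of_real (D \<omega> * (\<Prod>k\<in>K. indicator (A k) (T k \<omega>))))"
        by (rule Bochner_Integration.integral_cong) (auto simp: f F_def indicator_PiE_restrict[OF finK])
      also have "\<dots> = 0" using box[OF A] by (simp only: integral_complex_of_real of_real_0)
      finally show "(CLINT \<omega>|M. complex_of_real (D \<omega>) * f (F \<omega>)) = 0" .
    qed
    fix \<mu>1 \<mu>2 assume p1: "prob_space \<mu>1" and p2: "prob_space \<mu>2"
      and s1: "sets \<mu>1 = sets (PiM K (\<lambda>_. borel))" and s2: "sets \<mu>2 = sets (PiM K (\<lambda>_. borel))"
      and eq: "\<And>f. f \<in> ?Test \<Longrightarrow> (CLINT x|\<mu>1. f x) = (CLINT x|\<mu>2. f x)"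
    have f1: "finite_measure \<mu>1" and f2: "finite_measure \<mu>2" using p1 p2 by (simp_all add: prob_space_def)
    show "\<mu>1 = \<mu>2"
    proof (rule measure_eqI_PiM_finite[OF finK s1 s2])
      fix A :: "'k \<Rightarrow> real set" assume A: "\<And>i. i \<in> K \<Longrightarrow> A i \<in> sets borel"
      have "(CLINT x|\<mu>1. complex_of_real (indicator (Pi\<^sub>E K A) x)) = (CLINT x|\<mu>2. complex_of_real (indicator (Pi\<^sub>E K A) x))"
        by (rule eq) (use A in blast)
      hence "measure \<mu>1 (Pi\<^sub>E K A \<inter> space \<mu>1) = measure \<mu>2 (Pi\<^sub>E K A \<inter> space \<mu>2)" by simp
      moreover have "Pi\<^sub>E K A \<in> sets \<mu>1" "Pi\<^sub>E K A \<in> sets \<mu>2" unfolding s1 s2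
        by (rule sets_PiM_I_finite[OF finK], use A in auto)+
      ultimately show "emeasure \<mu>1 (Pi\<^sub>E K A) = emeasure \<mu>2 (Pi\<^sub>E K A)"
        using finite_measure.emeasure_eq_measure[OF f1] finite_measure.emeasure_eq_measure[OF f2]
        by (simp add: Int_absorb2 sets.sets_into_space)
    next
      show "range (\<lambda>_::nat. space (PiM K (\<lambda>_. borel))) \<subseteq> prod_algebra K (\<lambda>_. borel)"
        using space_in_prod_algebra[of K "\<lambda>_. borel"] by (auto simp: space_PiM)
      show "(\<Union>i::nat. space (PiM K (\<lambda>_. borel))) = space (PiM K (\<lambda>_. borel))" by simp
      show "\<And>i::nat. emeasure \<mu>1 (space (PiM K (\<lambda>_. borel))) \<noteq> \<infinity>"
        using finite_measure.emeasure_eq_measure[OF f1] by simp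
    qed
  qed
  thus ?thesis by (simp add: F_def)
qed

lemma sum_if_subset:
  assumes "finite S" "A \<subseteq> S"
  shows "(\<Sum>s\<in>S. if s \<in> A then f s else 0) = sum f A"
proof -
  have "(\<Sum>s\<in>S. if s \<in> A then f s else 0) = sum f (S \<inter> A)" using assms by (simp add: sum.inter_restrict)
  thus ?thesis using assms by (simp add: Int_absorb1)
qed

lemma quad_expand_bound:
  fixes \<sigma> \<psi> :: "'s \<Rightarrow> 's \<Rightarrow> real" and b :: "'s \<Rightarrow> real"
  assumes finS: "finite S" and YS: "Y \<subseteq> S"
    and sym: "\<And>s t. s \<in> S \<Longrightarrow> t \<in> S \<Longrightarrow> \<sigma> s t = \<sigma> t s"
    and psd: "\<And>c. (\<Sum>s\<in>S. \<Sum>t\<in>S. c s * \<sigma> s t * c t) \<ge> 0"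
    and inv1: "\<And>s t. s \<in> S \<Longrightarrow> t \<in> S \<Longrightarrow> (\<Sum>u\<in>S. \<sigma> s u * \<psi> u t) = (if s = t then 1 else 0)"
    and bsol: "\<And>s. s \<in> Y \<Longrightarrow> (\<Sum>t\<in>Y. \<sigma> s t * b t) = (if s \<in> R then 1 else 0)"
  shows "(\<Sum>t\<in>Y\<inter>R. b t) \<le> (\<Sum>s\<in>Y\<inter>R. \<Sum>t\<in>Y\<inter>R. \<psi> s t)"
proof -
  have finY: "finite Y" using finS YS finite_subset by blast
  define u where "u s = (if s \<in> Y \<inter> R then 1 else 0 :: real)" for s
  define c where "c s = (\<Sum>t\<in>S. \<psi> s t * u t)" for s
  define bb where "bb s = (if s \<in> Y then b s else 0)" for s
  define w where "w s = (\<Sum>t\<in>S. \<sigma> s t * bb t)" for s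
  have sc: "(\<Sum>t\<in>S. \<sigma> s t * c t) = u s" if s: "s \<in> S" for s
  proof -
    have "(\<Sum>t\<in>S. \<sigma> s t * c t) = (\<Sum>t\<in>S. \<Sum>v\<in>S. \<sigma> s t * \<psi> t v * u v)"
      by (simp add: c_def sum_distrib_left mult.assoc)
    also have "\<dots> = (\<Sum>v\<in>S. \<Sum>t\<in>S. \<sigma> s t * \<psi> t v * u v)" by (rule sum.swap)
    also have "\<dots> = (\<Sum>v\<in>S. (\<Sum>t\<in>S. \<sigma> s t * \<psi> t v) * u v)" by (simp add: sum_distrib_right)
    also have "\<dots> = (\<Sum>v\<in>S. (if s = v then 1 else 0) * u v)"
      by (rule sum.cong) (use inv1 s in auto)
    also have "\<dots> = (\<Sum>v\<in>S. if s = v then u v else 0)" by (rule sum.cong) auto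
    also have "\<dots> = u s" using s finS by (simp add: sum.delta)
    finally show ?thesis .
  qed
  have wY: "w s = u s" if s: "s \<in> Y" for s
  proof -
    have "w s = (\<Sum>t\<in>Y. \<sigma> s t * b t)"
      unfolding w_def bb_def using YS finS
      by (simp add: if_distrib sum.inter_restrict[symmetric] Int_absorb1 cong: if_cong)
    also have "\<dots> = u s" using bsol[OF s] s by (simp add: u_def)
    finally show ?thesis .
  qed
  define x where "x s = c s - bb s" for s
  have "0 \<le> (\<Sum>s\<in>S. \<Sum>t\<in>S. x s * \<sigma> s t * x t)" by (rule psd)
  also have "\<dots> = (\<Sum>s\<in>S. x s * (u s - w s))"
  proof (rule sum.cong[OF refl])
    fix s assume s: "s \<in> S"
    have "(\<Sum>t\<in>S. x s * \<sigma> s t * x t) = x s * (\<Sum>t\<in>S. \<sigma> s t * x t)"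
      by (simp add: sum_distrib_left mult.assoc)
    also have "(\<Sum>t\<in>S. \<sigma> s t * x t) = (\<Sum>t\<in>S. \<sigma> s t * c t) - (\<Sum>t\<in>S. \<sigma> s t * bb t)"
      by (simp add: x_def right_diff_distrib sum_subtractf)
    also have "\<dots> = u s - w s" using sc[OF s] by (simp add: w_def)
    finally show "(\<Sum>t\<in>S. x s * \<sigma> s t * x t) = x s * (u s - w s)" .
  qed
  also have "\<dots> = (\<Sum>s\<in>S. c s * u s) - (\<Sum>s\<in>S. c s * w s) - (\<Sum>s\<in>S. bb s * u s) + (\<Sum>s\<in>S. bb s * w s)"
    by (simp add: x_def algebra_simps sum.distrib sum_subtractf)
  also have "(\<Sum>s\<in>S. c s * w s) = (\<Sum>t\<in>S. bb t * u t)"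
  proof -
    have "(\<Sum>s\<in>S. c s * w s) = (\<Sum>s\<in>S. \<Sum>t\<in>S. c s * \<sigma> s t * bb t)"
      by (simp add: w_def sum_distrib_left mult.assoc)
    also have "\<dots> = (\<Sum>t\<in>S. \<Sum>s\<in>S. c s * \<sigma> s t * bb t)" by (rule sum.swap)
    also have "\<dots> = (\<Sum>t\<in>S. bb t * (\<Sum>s\<in>S. \<sigma> t s * c s))"
      by (rule sum.cong[OF refl]) (auto simp: sum_distrib_left sym intro!: sum.cong)
    also have "\<dots> = (\<Sum>t\<in>S. bb t * u t)" by (rule sum.cong[OF refl]) (simp add: sc)
    finally show ?thesis .
  qed
  also have "(\<Sum>s\<in>S. bb s * w s) = (\<Sum>s\<in>S. bb s * u s)"
    by (rule sum.cong[OF refl]) (auto simp: bb_def wY)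
  finally have le: "(\<Sum>s\<in>S. bb s * u s) \<le> (\<Sum>s\<in>S. c s * u s)" by simp
  have YRS: "Y \<inter> R \<subseteq> S" using YS by auto
  have e1: "(\<Sum>s\<in>S. bb s * u s) = (\<Sum>t\<in>Y\<inter>R. b t)"
  proof -
    have "(\<Sum>s\<in>S. bb s * u s) = (\<Sum>s\<in>S. if s \<in> Y\<inter>R then b s else 0)"
      by (rule sum.cong) (auto simp: bb_def u_def)
    also have "\<dots> = sum b (S \<inter> (Y\<inter>R))" using finS by (simp add: sum.inter_restrict)
    finally show ?thesis using YRS by (simp add: Int_absorb1)
  qed
  have e2: "(\<Sum>s\<in>S. c s * u s) = (\<Sum>s\<in>Y\<inter>R. c s)"
  proof -
    have "(\<Sum>s\<in>S. c s * u s) = (\<Sum>s\<in>S. if s \<in> Y\<inter>R then c s else 0)"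
      by (rule sum.cong) (auto simp: u_def)
    thus ?thesis using sum_if_subset[OF finS YRS] by simp
  qed
  have e3: "c s = (\<Sum>t\<in>Y\<inter>R. \<psi> s t)" for s
  proof -
    have "c s = (\<Sum>t\<in>S. if t \<in> Y\<inter>R then \<psi> s t else 0)"
      unfolding c_def by (rule sum.cong) (auto simp: u_def)
    thus ?thesis using sum_if_subset[OF finS YRS] by simp
  qed
  show ?thesis using le e1 e2 e3 by simp
qed

lemma sum_insert_split2:
  assumes "finite Y" "a \<notin> Y"
  shows "(\<Sum>s\<in>insert a Y. \<Sum>t\<in>insert a Y. f s t) = f a a + (\<Sum>t\<in>Y. f a t) + (\<Sum>s\<in>Y. f s a) + (\<Sum>s\<in>Y. \<Sum>t\<in>Y. f s t)"
  using assms by (simp add: sum.distrib algebra_simps)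

lemma aux_lin:
  fixes d x va vs Q :: real
  assumes "d > 0"
  shows "x * ((va - Q) / d) + (vs - x * va / d + x / d * Q) = vs"
  using assms by (simp add: field_simps)

lemma pd_solve:
  fixes \<sigma> :: "'s \<Rightarrow> 's \<Rightarrow> real"
  assumes "finite Y"
  shows "(\<forall>s\<in>Y. \<forall>t\<in>Y. \<sigma> s t = \<sigma> t s) \<longrightarrow>
    (\<forall>c. (\<exists>s\<in>Y. c s \<noteq> 0) \<longrightarrow> (\<Sum>s\<in>Y. \<Sum>t\<in>Y. c s * \<sigma> s t * c t) > 0) \<longrightarrow>
    (\<exists>b. \<forall>s\<in>Y. (\<Sum>t\<in>Y. \<sigma> s t * b t) = v s)"
  using assms
proof (induct Y arbitrary: \<sigma> v rule: finite_induct)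
  case empty
  then show ?case by simp
next
  case (insert a Y)
  show ?case
  proof (intro impI)
    assume sym: "\<forall>s\<in>insert a Y. \<forall>t\<in>insert a Y. \<sigma> s t = \<sigma> t s"
    assume pd: "\<forall>c. (\<exists>s\<in>insert a Y. c s \<noteq> 0) \<longrightarrow> (\<Sum>s\<in>insert a Y. \<Sum>t\<in>insert a Y. c s * \<sigma> s t * c t) > 0"
    define e where "e x = (if x = a then 1 else 0 :: real)" for x
    have eY: "\<And>x. x \<in> Y \<Longrightarrow> e x = 0" using insert(2) by (auto simp: e_def)
    have "(\<Sum>s\<in>insert a Y. \<Sum>t\<in>insert a Y. e s * \<sigma> s t * e t) > (0::real)"
      by (rule pd[rule_format]) (auto simp: e_def)
    also have "(\<Sum>s\<in>insert a Y. \<Sum>t\<in>insert a Y. e s * \<sigma> s t * e t) =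
       e a * \<sigma> a a * e a + (\<Sum>t\<in>Y. e a * \<sigma> a t * e t) + (\<Sum>s\<in>Y. e s * \<sigma> s a * e a) + (\<Sum>s\<in>Y. \<Sum>t\<in>Y. e s * \<sigma> s t * e t)"
      by (rule sum_insert_split2[OF insert(1,2)])
    also have "(\<Sum>t\<in>Y. e a * \<sigma> a t * e t) = 0" by (rule sum.neutral) (simp add: eY)
    also have "(\<Sum>s\<in>Y. e s * \<sigma> s a * e a) = 0" by (rule sum.neutral) (simp add: eY)
    also have "(\<Sum>s\<in>Y. \<Sum>t\<in>Y. e s * \<sigma> s t * e t) = 0" by (rule sum.neutral) (simp add: eY)
    also have "e a = 1" by (simp add: e_def)
    finally have saa: "\<sigma> a a > 0" by simp
    define \<sigma>' where "\<sigma>' s t = \<sigma> s t - \<sigma> s a * \<sigma> a t / \<sigma> a a" for s t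
    define v' where "v' s = v s - \<sigma> s a * v a / \<sigma> a a" for s
    have symI: "\<sigma> s t = \<sigma> t s" if "s \<in> insert a Y" "t \<in> insert a Y" for s t
      using sym that by blast
    have sym': "\<forall>s\<in>Y. \<forall>t\<in>Y. \<sigma>' s t = \<sigma>' t s"
    proof (intro ballI)
      fix s t assume st: "s \<in> Y" "t \<in> Y"
      have "\<sigma> s t = \<sigma> t s" "\<sigma> s a = \<sigma> a s" "\<sigma> a t = \<sigma> t a" using symI st by auto
      thus "\<sigma>' s t = \<sigma>' t s" by (simp add: \<sigma>'_def)
    qed
    have pd': "\<forall>c. (\<exists>s\<in>Y. c s \<noteq> 0) \<longrightarrow> (\<Sum>s\<in>Y. \<Sum>t\<in>Y. c s * \<sigma>' s t * c t) > 0"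
    proof (intro allI impI)
      fix c :: "'s \<Rightarrow> real" assume nz: "\<exists>s\<in>Y. c s \<noteq> 0"
      define \<beta> where "\<beta> = (\<Sum>t\<in>Y. \<sigma> a t * c t)"
      define \<alpha> where "\<alpha> = - \<beta> / \<sigma> a a"
      define c' where "c' x = (if x = a then \<alpha> else c x)" for x
      have "\<exists>s\<in>insert a Y. c' s \<noteq> 0" using nz insert(2) by (auto simp: c'_def)
      hence pos: "(\<Sum>s\<in>insert a Y. \<Sum>t\<in>insert a Y. c' s * \<sigma> s t * c' t) > 0" by (rule pd[rule_format])
      have c'Y: "\<And>x. x \<in> Y \<Longrightarrow> c' x = c x" using insert(2) by (auto simp: c'_def)
      have s1: "(\<Sum>t\<in>Y. c' a * \<sigma> a t * c' t) = \<alpha> * \<beta>"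
      proof -
        have "(\<Sum>t\<in>Y. c' a * \<sigma> a t * c' t) = (\<Sum>t\<in>Y. \<alpha> * (\<sigma> a t * c t))"
          by (rule sum.cong[OF refl]) (simp add: c'Y, simp add: c'_def)
        thus ?thesis by (simp add: \<beta>_def sum_distrib_left)
      qed
      have s2: "(\<Sum>s\<in>Y. c' s * \<sigma> s a * c' a) = \<alpha> * \<beta>"
      proof -
        have "(\<Sum>s\<in>Y. c' s * \<sigma> s a * c' a) = (\<Sum>s\<in>Y. \<alpha> * (\<sigma> a s * c s))"
        proof (rule sum.cong[OF refl])
          fix s assume s: "s \<in> Y"
          have "\<sigma> s a = \<sigma> a s" using symI s by auto
          moreover have "s \<noteq> a" using s insert(2) by auto
          ultimately show "c' s * \<sigma> s a * c' a = \<alpha> * (\<sigma> a s * c s)" by (simp add: c'_def)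
        qed
        thus ?thesis by (simp add: \<beta>_def sum_distrib_left)
      qed
      have s3: "(\<Sum>s\<in>Y. \<Sum>t\<in>Y. c' s * \<sigma> s t * c' t) = (\<Sum>s\<in>Y. \<Sum>t\<in>Y. c s * \<sigma> s t * c t)"
        by (intro sum.cong refl) (simp add: c'Y)
      have s4: "(\<Sum>s\<in>Y. \<Sum>t\<in>Y. c s * \<sigma>' s t * c t) = (\<Sum>s\<in>Y. \<Sum>t\<in>Y. c s * \<sigma> s t * c t) - \<beta> * \<beta> / \<sigma> a a"
      proof -
        have "(\<Sum>s\<in>Y. \<Sum>t\<in>Y. c s * \<sigma>' s t * c t) = (\<Sum>s\<in>Y. \<Sum>t\<in>Y. c s * \<sigma> s t * c t - (\<sigma> a s * c s) * (\<sigma> a t * c t) / \<sigma> a a)"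
        proof (intro sum.cong refl)
          fix s t assume s: "s \<in> Y" and t: "t \<in> Y"
          have "\<sigma> s a = \<sigma> a s" using symI s by auto
          thus "c s * \<sigma>' s t * c t = c s * \<sigma> s t * c t - (\<sigma> a s * c s) * (\<sigma> a t * c t) / \<sigma> a a"
            by (simp add: \<sigma>'_def algebra_simps)
        qed
        also have "\<dots> = (\<Sum>s\<in>Y. \<Sum>t\<in>Y. c s * \<sigma> s t * c t) - (\<Sum>s\<in>Y. \<Sum>t\<in>Y. (\<sigma> a s * c s) * (\<sigma> a t * c t) / \<sigma> a a)"
          by (simp add: sum_subtractf)
        also have "(\<Sum>s\<in>Y. \<Sum>t\<in>Y. (\<sigma> a s * c s) * (\<sigma> a t * c t) / \<sigma> a a) = \<beta> * \<beta> / \<sigma> a a"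
          by (simp add: \<beta>_def sum_distrib_left sum_distrib_right sum_divide_distrib) (subst sum.swap, simp add: mult_ac)
        finally show ?thesis .
      qed
      have "(\<Sum>s\<in>insert a Y. \<Sum>t\<in>insert a Y. c' s * \<sigma> s t * c' t) =
          c' a * \<sigma> a a * c' a + \<alpha> * \<beta> + \<alpha> * \<beta> + (\<Sum>s\<in>Y. \<Sum>t\<in>Y. c s * \<sigma> s t * c t)"
        using sum_insert_split2[OF insert(1,2), of "\<lambda>s t. c' s * \<sigma> s t * c' t"] s1 s2 s3 by simp
      also have "c' a * \<sigma> a a * c' a + \<alpha> * \<beta> + \<alpha> * \<beta> = - \<beta> * \<beta> / \<sigma> a a"
        using saa by (simp add: c'_def \<alpha>_def field_simps power2_eq_square)
      finally show "(\<Sum>s\<in>Y. \<Sum>t\<in>Y. c s * \<sigma>' s t * c t) > 0" using pos s4 by simp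
    qed
    obtain b' where b': "\<forall>s\<in>Y. (\<Sum>t\<in>Y. \<sigma>' s t * b' t) = v' s"
      using mp[OF mp[OF insert(3)[of \<sigma>' v'] sym'] pd'] by blast
    define \<gamma> where "\<gamma> = (v a - (\<Sum>t\<in>Y. \<sigma> a t * b' t)) / \<sigma> a a"
    define b where "b x = (if x = a then \<gamma> else b' x)" for x
    have bY: "\<And>x. x \<in> Y \<Longrightarrow> b x = b' x" using insert(2) by (auto simp: b_def)
    have sY: "(\<Sum>t\<in>Y. \<sigma> s t * b t) = (\<Sum>t\<in>Y. \<sigma> s t * b' t)" for s
      by (rule sum.cong) (simp_all add: bY)
    show "\<exists>b. \<forall>s\<in>insert a Y. (\<Sum>t\<in>insert a Y. \<sigma> s t * b t) = v s"
    proof (intro exI ballI)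
      fix s assume s: "s \<in> insert a Y"
      have e: "(\<Sum>t\<in>insert a Y. \<sigma> s t * b t) = \<sigma> s a * \<gamma> + (\<Sum>t\<in>Y. \<sigma> s t * b' t)"
        using insert(1,2) sY by (simp add: b_def)
      show "(\<Sum>t\<in>insert a Y. \<sigma> s t * b t) = v s"
      proof (cases "s = a")
        case True thus ?thesis using e saa by (simp add: \<gamma>_def)
      next
        case False
        hence sY': "s \<in> Y" using s by simp
        have "(\<Sum>t\<in>Y. \<sigma>' s t * b' t) = (\<Sum>t\<in>Y. \<sigma> s t * b' t) - \<sigma> s a / \<sigma> a a * (\<Sum>t\<in>Y. \<sigma> a t * b' t)"
          by (simp add: \<sigma>'_def left_diff_distrib sum_subtractf sum_distrib_left mult.assoc)
        hence "(\<Sum>t\<in>Y. \<sigma> s t * b' t) = v' s + \<sigma> s a / \<sigma> a a * (\<Sum>t\<in>Y. \<sigma> a t * b' t)"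
          using b' sY' by simp
        hence P: "(\<Sum>t\<in>Y. \<sigma> s t * b' t) = v s - \<sigma> s a * v a / \<sigma> a a + \<sigma> s a / \<sigma> a a * (\<Sum>t\<in>Y. \<sigma> a t * b' t)"
          by (simp add: v'_def)
        show ?thesis unfolding e P \<gamma>_def using saa by (rule aux_lin)
      qed
    qed
  qed
qed

lemma quad_shift:
  fixes \<sigma> :: "'s \<Rightarrow> 's \<Rightarrow> real"
  assumes finS: "finite S" and w: "w \<in> S"
    and symI: "\<And>s t. s \<in> S \<Longrightarrow> t \<in> S \<Longrightarrow> \<sigma> s t = \<sigma> t s"
  shows "(\<Sum>s\<in>S. \<Sum>t\<in>S. (c s + x * (if s = w then 1 else 0)) * \<sigma> s t * (c t + x * (if t = w then 1 else 0)))
    = (\<Sum>s\<in>S. \<Sum>t\<in>S. c s * \<sigma> s t * c t) + 2 * x * (\<Sum>t\<in>S. \<sigma> w t * c t) + x\<^sup>2 * \<sigma> w w"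
proof -
  define e where "e y = (if y = w then 1 else 0 :: real)" for y
  have exp: "(c s + x * e s) * \<sigma> s t * (c t + x * e t) =
     c s * \<sigma> s t * c t + x * (e s * \<sigma> s t * c t) + x * (c s * \<sigma> s t * e t) + x\<^sup>2 * (e s * \<sigma> s t * e t)" for s t
    by (simp add: algebra_simps power2_eq_square)
  have A: "(\<Sum>s\<in>S. \<Sum>t\<in>S. e s * \<sigma> s t * c t) = (\<Sum>t\<in>S. \<sigma> w t * c t)"
  proof -
    have "(\<Sum>s\<in>S. \<Sum>t\<in>S. e s * \<sigma> s t * c t) = (\<Sum>s\<in>S. if s = w then (\<Sum>t\<in>S. \<sigma> s t * c t) else 0)"
      by (rule sum.cong[OF refl]) (simp add: e_def)
    also have "\<dots> = (\<Sum>t\<in>S. \<sigma> w t * c t)" using finS w by (simp add: sum.delta')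
    finally show ?thesis .
  qed
  have B: "(\<Sum>s\<in>S. \<Sum>t\<in>S. c s * \<sigma> s t * e t) = (\<Sum>t\<in>S. \<sigma> w t * c t)"
  proof -
    have "(\<Sum>s\<in>S. \<Sum>t\<in>S. c s * \<sigma> s t * e t) = (\<Sum>s\<in>S. \<Sum>t\<in>S. if t = w then c s * \<sigma> s t else 0)"
      by (intro sum.cong refl) (simp add: e_def)
    also have "\<dots> = (\<Sum>s\<in>S. c s * \<sigma> s w)" using finS w by (simp add: sum.delta')
    also have "\<dots> = (\<Sum>t\<in>S. \<sigma> w t * c t)"
      by (rule sum.cong[OF refl]) (simp add: symI[OF _ w] mult.commute)
    finally show ?thesis .
  qed
  have C: "(\<Sum>s\<in>S. \<Sum>t\<in>S. e s * \<sigma> s t * e t) = \<sigma> w w"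
  proof -
    have "(\<Sum>s\<in>S. \<Sum>t\<in>S. e s * \<sigma> s t * e t) = (\<Sum>s\<in>S. if s = w then (\<Sum>t\<in>S. if t = w then \<sigma> s t else 0) else 0)"
      by (intro sum.cong refl) (auto simp: e_def intro!: sum.cong)
    also have "\<dots> = \<sigma> w w" using finS w by (simp add: sum.delta')
    finally show ?thesis .
  qed
  have "(\<Sum>s\<in>S. \<Sum>t\<in>S. (c s + x * e s) * \<sigma> s t * (c t + x * e t))
     = (\<Sum>s\<in>S. \<Sum>t\<in>S. c s * \<sigma> s t * c t) + x * (\<Sum>s\<in>S. \<Sum>t\<in>S. e s * \<sigma> s t * c t)
       + x * (\<Sum>s\<in>S. \<Sum>t\<in>S. c s * \<sigma> s t * e t) + x\<^sup>2 * (\<Sum>s\<in>S. \<Sum>t\<in>S. e s * \<sigma> s t * e t)"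
    unfolding exp by (simp add: sum.distrib sum_distrib_left)
  also have "\<dots> = (\<Sum>s\<in>S. \<Sum>t\<in>S. c s * \<sigma> s t * c t) + 2 * x * (\<Sum>t\<in>S. \<sigma> w t * c t) + x\<^sup>2 * \<sigma> w w"
    unfolding A B C by simp
  finally show ?thesis unfolding e_def .
qed

lemma psd_kernel:
  fixes \<sigma> :: "'s \<Rightarrow> 's \<Rightarrow> real"
  assumes finS: "finite S"
    and symI: "\<And>s t. s \<in> S \<Longrightarrow> t \<in> S \<Longrightarrow> \<sigma> s t = \<sigma> t s"
    and psd: "\<And>c. (\<Sum>s\<in>S. \<Sum>t\<in>S. c s * \<sigma> s t * c t) \<ge> 0"
    and q0: "(\<Sum>s\<in>S. \<Sum>t\<in>S. c s * \<sigma> s t * c t) = 0"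
    and w: "w \<in> S"
  shows "(\<Sum>t\<in>S. \<sigma> w t * c t) = 0"
proof (rule ccontr)
  define B where "B = (\<Sum>t\<in>S. \<sigma> w t * c t)"
  assume "(\<Sum>t\<in>S. \<sigma> w t * c t) \<noteq> 0"
  hence B0: "B \<noteq> 0" by (simp add: B_def)
  define k where "k = \<bar>\<sigma> w w\<bar> + 1"
  have k: "k \<ge> 1" "\<sigma> w w \<le> k" by (auto simp: k_def)
  define x where "x = - B / k"
  have "0 \<le> (\<Sum>s\<in>S. \<Sum>t\<in>S. (c s + x * (if s = w then 1 else 0)) * \<sigma> s t * (c t + x * (if t = w then 1 else 0)))"
    by (rule psd)
  also have "\<dots> = (\<Sum>s\<in>S. \<Sum>t\<in>S. c s * \<sigma> s t * c t) + 2 * x * (\<Sum>t\<in>S. \<sigma> w t * c t) + x\<^sup>2 * \<sigma> w w"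
    by (rule quad_shift[OF finS w symI])
  also have "\<dots> = 2 * x * B + x\<^sup>2 * \<sigma> w w" using q0 by (simp add: B_def)
  also have "\<dots> = - 2 * B\<^sup>2 / k + B\<^sup>2 * \<sigma> w w / k\<^sup>2"
    using k by (simp add: x_def power2_eq_square field_simps)
  also have "B\<^sup>2 * \<sigma> w w / k\<^sup>2 \<le> B\<^sup>2 * k / k\<^sup>2"
    using k by (intro divide_right_mono mult_left_mono) auto
  also have "B\<^sup>2 * k / k\<^sup>2 = B\<^sup>2 / k" using k by (simp add: power2_eq_square)
  finally have "0 \<le> - B\<^sup>2 / k" by simp
  moreover have "B\<^sup>2 / k > 0" using B0 k by simp
  ultimately show False by simp
qed

lemma pd_subset:
  fixes \<sigma> \<psi> :: "'s \<Rightarrow> 's \<Rightarrow> real"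
  assumes finS: "finite S" and YS: "Y \<subseteq> S"
    and symI: "\<And>s t. s \<in> S \<Longrightarrow> t \<in> S \<Longrightarrow> \<sigma> s t = \<sigma> t s"
    and psd: "\<And>c. (\<Sum>s\<in>S. \<Sum>t\<in>S. c s * \<sigma> s t * c t) \<ge> 0"
    and inv2: "\<And>s t. s \<in> S \<Longrightarrow> t \<in> S \<Longrightarrow> (\<Sum>u\<in>S. \<psi> s u * \<sigma> u t) = (if s = t then 1 else 0)"
    and nz: "s0 \<in> Y" "c s0 \<noteq> 0"
  shows "(\<Sum>s\<in>Y. \<Sum>t\<in>Y. c s * \<sigma> s t * c t) > 0"
proof -
  define c' where "c' x = (if x \<in> Y then c x else 0)" for x
  have eq: "(\<Sum>s\<in>Y. \<Sum>t\<in>Y. c s * \<sigma> s t * c t) = (\<Sum>s\<in>S. \<Sum>t\<in>S. c' s * \<sigma> s t * c' t)"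
  proof -
    have "(\<Sum>s\<in>S. \<Sum>t\<in>S. c' s * \<sigma> s t * c' t) = (\<Sum>s\<in>S. if s \<in> Y then (\<Sum>t\<in>S. if t \<in> Y then c s * \<sigma> s t * c t else 0) else 0)"
      by (intro sum.cong refl) (auto simp: c'_def intro!: sum.cong)
    also have "\<dots> = (\<Sum>s\<in>Y. (\<Sum>t\<in>S. if t \<in> Y then c s * \<sigma> s t * c t else 0))"
      by (rule sum_if_subset[OF finS YS])
    also have "\<dots> = (\<Sum>s\<in>Y. \<Sum>t\<in>Y. c s * \<sigma> s t * c t)"
      by (rule sum.cong[OF refl]) (rule sum_if_subset[OF finS YS])
    finally show ?thesis by simp
  qed
  have ge: "(\<Sum>s\<in>S. \<Sum>t\<in>S. c' s * \<sigma> s t * c' t) \<ge> 0" by (rule psd)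
  show ?thesis
  proof (rule ccontr)
    assume "\<not> ?thesis"
    hence q0: "(\<Sum>s\<in>S. \<Sum>t\<in>S. c' s * \<sigma> s t * c' t) = 0" using eq ge by simp
    have ker: "\<And>w. w \<in> S \<Longrightarrow> (\<Sum>t\<in>S. \<sigma> w t * c' t) = 0"
      by (rule psd_kernel[OF finS symI psd q0])
    have s0S: "s0 \<in> S" using nz YS by auto
    have "(\<Sum>t\<in>S. (if s0 = t then 1 else 0) * c' t) = (\<Sum>t\<in>S. if s0 = t then c' t else 0)"
      by (rule sum.cong) auto
    hence "c' s0 = (\<Sum>t\<in>S. (if s0 = t then 1 else 0) * c' t)"
      using finS s0S by (simp add: sum.delta)
    also have "\<dots> = (\<Sum>t\<in>S. (\<Sum>u\<in>S. \<psi> s0 u * \<sigma> u t) * c' t)"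
      by (rule sum.cong[OF refl]) (simp add: inv2[OF s0S])
    also have "\<dots> = (\<Sum>u\<in>S. \<psi> s0 u * (\<Sum>t\<in>S. \<sigma> u t * c' t))"
      by (simp add: sum_distrib_right sum_distrib_left mult.assoc) (rule sum.swap)
    also have "\<dots> = 0" by (simp add: ker)
    finally show False using nz by (simp add: c'_def)
  qed
qed

lemma norm_iexp_sub_lin: "cmod (iexp x - 1 - \<i> * complex_of_real x) \<le> x\<^sup>2 / 2"
  using iexp_approx1[of x 1] by (simp add: power2_eq_square diff_diff_eq)

lemma exp_neg_sub1_bound: "a \<ge> 0 \<Longrightarrow> \<bar>exp (- a) - 1\<bar> \<le> (a::real)"
  using exp_ge_add_one_self[of "-a"] by (auto simp: abs_if)

lemma abs_prod_le_sq: "\<bar>a * b\<bar> \<le> a\<^sup>2 + (b::real)\<^sup>2"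
proof -
  have "0 \<le> (\<bar>a\<bar> - \<bar>b\<bar>)\<^sup>2" by simp
  hence "2 * (\<bar>a\<bar> * \<bar>b\<bar>) \<le> a\<^sup>2 + b\<^sup>2" by (simp add: power2_diff)
  moreover have "0 \<le> \<bar>a\<bar> * \<bar>b\<bar>" by simp
  ultimately show ?thesis unfolding abs_mult by linarith
qed

lemma gauss_orth_char:
  fixes D0 X :: "'a \<Rightarrow> real"
  assumes P: "prob_space M"
    and G: "\<And>s. gaussian_rv M (\<lambda>\<omega>. s * D0 \<omega> + X \<omega>)"
    and cov: "(\<integral>\<omega>. (D0 \<omega> - (\<integral>\<omega>. D0 \<omega> \<partial>M)) * (X \<omega> - (\<integral>\<omega>. X \<omega> \<partial>M)) \<partial>M) = 0"
  shows "(CLINT \<omega>|M. complex_of_real (D0 \<omega> - (\<integral>\<omega>. D0 \<omega> \<partial>M)) * iexp (X \<omega>)) = 0"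
proof -
  interpret prob_space M by fact
  have GX: "gaussian_rv M X" using G[of 0] by simp
  have G1: "gaussian_rv M (\<lambda>\<omega>. D0 \<omega> + X \<omega>)" using G[of 1] by simp
  have Xm[measurable]: "X \<in> borel_measurable M" using GX by (simp add: gaussian_rv_def)
  have Ym: "(\<lambda>\<omega>. D0 \<omega> + X \<omega>) \<in> borel_measurable M" using G1 by (simp add: gaussian_rv_def)
  have D0m[measurable]: "D0 \<in> borel_measurable M"
  proof -
    have "(\<lambda>\<omega>. (D0 \<omega> + X \<omega>) - X \<omega>) \<in> borel_measurable M" using Ym Xm by measurable
    thus ?thesis by simp
  qed
  note iX = gaussian_rv_integrable[OF P GX]
  note iY = gaussian_rv_integrable[OF P G1]
  have iD0: "integrable M D0"
  proof -
    have "integrable M (\<lambda>\<omega>. (D0 \<omega> + X \<omega>) - X \<omega>)" by (rule Bochner_Integration.integrable_diff[OF iY(1) iX(1)])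
    thus ?thesis by simp
  qed
  have iD02: "integrable M (\<lambda>\<omega>. (D0 \<omega>)\<^sup>2)"
  proof (rule Bochner_Integration.integrable_bound[of _ "\<lambda>\<omega>. 2 * (D0 \<omega> + X \<omega>)\<^sup>2 + 2 * (X \<omega>)\<^sup>2"])
    show "integrable M (\<lambda>\<omega>. 2 * (D0 \<omega> + X \<omega>)\<^sup>2 + 2 * (X \<omega>)\<^sup>2)" using iX iY by auto
    show "AE \<omega> in M. norm ((D0 \<omega>)\<^sup>2) \<le> norm (2 * (D0 \<omega> + X \<omega>)\<^sup>2 + 2 * (X \<omega>)\<^sup>2)"
    proof (intro AE_I2)
      fix \<omega>
      have "(D0 \<omega>)\<^sup>2 \<le> 2 * (D0 \<omega> + X \<omega>)\<^sup>2 + 2 * (X \<omega>)\<^sup>2"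
        using sum_squares_ge_zero[of "D0 \<omega> + 2 * X \<omega>" 0] by (simp add: power2_eq_square algebra_simps)
      thus "norm ((D0 \<omega>)\<^sup>2) \<le> norm (2 * (D0 \<omega> + X \<omega>)\<^sup>2 + 2 * (X \<omega>)\<^sup>2)" by simp
    qed
  qed measurable
  define mD where "mD = (\<integral>\<omega>. D0 \<omega> \<partial>M)"
  define mX where "mX = (\<integral>\<omega>. X \<omega> \<partial>M)"
  define D where "D \<omega> = D0 \<omega> - mD" for \<omega>
  define Xc where "Xc \<omega> = X \<omega> - mX" for \<omega>
  have Dm[measurable]: "D \<in> borel_measurable M" unfolding D_def[abs_def] by measurable
  have iD: "integrable M D" unfolding D_def[abs_def] using iD0 by auto
  have iD2: "integrable M (\<lambda>\<omega>. (D \<omega>)\<^sup>2)"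
  proof -
    have "integrable M (\<lambda>\<omega>. (D0 \<omega>)\<^sup>2 - 2 * mD * D0 \<omega> + mD\<^sup>2)" using iD02 iD0 by auto
    thus ?thesis by (simp add: D_def power2_diff algebra_simps)
  qed
  have iXc2: "integrable M (\<lambda>\<omega>. (Xc \<omega>)\<^sup>2)"
  proof -
    have "integrable M (\<lambda>\<omega>. (X \<omega>)\<^sup>2 - 2 * mX * X \<omega> + mX\<^sup>2)" using iX by auto
    thus ?thesis by (simp add: Xc_def power2_diff algebra_simps)
  qed
  have iXc: "integrable M Xc" unfolding Xc_def[abs_def] using iX by auto
  have iDX: "integrable M (\<lambda>\<omega>. D \<omega> * Xc \<omega>)"
  proof (rule Bochner_Integration.integrable_bound[of _ "\<lambda>\<omega>. (D \<omega>)\<^sup>2 + (Xc \<omega>)\<^sup>2"])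
    show "integrable M (\<lambda>\<omega>. (D \<omega>)\<^sup>2 + (Xc \<omega>)\<^sup>2)" using iD2 iXc2 by auto
    show "AE \<omega> in M. norm (D \<omega> * Xc \<omega>) \<le> norm ((D \<omega>)\<^sup>2 + (Xc \<omega>)\<^sup>2)"
    proof (intro AE_I2)
      fix \<omega>
      have "\<bar>D \<omega> * Xc \<omega>\<bar> \<le> (D \<omega>)\<^sup>2 + (Xc \<omega>)\<^sup>2" by (rule abs_prod_le_sq)
      thus "norm (D \<omega> * Xc \<omega>) \<le> norm ((D \<omega>)\<^sup>2 + (Xc \<omega>)\<^sup>2)" by simp
    qed
  qed (use Xm in \<open>simp add: Xc_def[abs_def]\<close>)
  have covDX: "(\<integral>\<omega>. D \<omega> * Xc \<omega> \<partial>M) = 0" using cov by (simp add: D_def mD_def Xc_def mX_def)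
  define vD where "vD = (\<integral>\<omega>. (D \<omega>)\<^sup>2 \<partial>M)"
  define vX where "vX = (\<integral>\<omega>. (Xc \<omega>)\<^sup>2 \<partial>M)"
  have vD0: "vD \<ge> 0" unfolding vD_def by simp
  have vX0: "vX \<ge> 0" unfolding vX_def by simp
  have chs: "(CLINT \<omega>|M. iexp (s * D \<omega> + X \<omega>)) = iexp mX * complex_of_real (exp (- vX / 2)) * complex_of_real (exp (- s\<^sup>2 * vD / 2))" for s
  proof -
    have e1: "expectation (\<lambda>\<omega>. s * D0 \<omega> + X \<omega>) = s * mD + mX"
      using iD0 iX by (simp add: mD_def mX_def)
    have "(\<integral>\<omega>. (s * D0 \<omega> + X \<omega> - (s * mD + mX))\<^sup>2 \<partial>M) = (\<integral>\<omega>. s\<^sup>2 * (D \<omega>)\<^sup>2 + 2 * s * (D \<omega> * Xc \<omega>) + (Xc \<omega>)\<^sup>2 \<partial>M)"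
      by (rule Bochner_Integration.integral_cong) (auto simp: D_def Xc_def power2_eq_square algebra_simps)
    also have "\<dots> = s\<^sup>2 * vD + vX"
      using iD2 iDX iXc2 covDX by (simp add: vD_def vX_def)
    finally have v1: "(\<integral>\<omega>. (s * D0 \<omega> + X \<omega> - (s * mD + mX))\<^sup>2 \<partial>M) = s\<^sup>2 * vD + vX" .
    have "(CLINT \<omega>|M. iexp (s * D \<omega> + X \<omega>)) = (CLINT \<omega>|M. iexp (- s * mD) * iexp (s * D0 \<omega> + X \<omega>))"
    proof (rule Bochner_Integration.integral_cong[OF refl])
      fix \<omega>
      have "s * D \<omega> + X \<omega> = - s * mD + (s * D0 \<omega> + X \<omega>)" by (simp add: D_def algebra_simps)
      thus "iexp (s * D \<omega> + X \<omega>) = iexp (- s * mD) * iexp (s * D0 \<omega> + X \<omega>)"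
        by (simp only: iexp_add)
    qed
    also have "\<dots> = iexp (- s * mD) * (CLINT \<omega>|M. iexp (s * D0 \<omega> + X \<omega>))" by simp
    also have "(CLINT \<omega>|M. iexp (s * D0 \<omega> + X \<omega>)) = iexp (s * mD + mX) * complex_of_real (exp (- (s\<^sup>2 * vD + vX) / 2))"
    proof -
      have "(CLINT \<omega>|M. iexp (s * D0 \<omega> + X \<omega>)) = iexp (expectation (\<lambda>\<omega>. s * D0 \<omega> + X \<omega>)) *
          complex_of_real (exp (- variance (\<lambda>\<omega>. s * D0 \<omega> + X \<omega>) / 2))"
        by (rule gaussian_rv_char[OF P G[of s]])
      thus ?thesis by (simp only: e1 v1)
    qed
    also have "iexp (- s * mD) * (iexp (s * mD + mX) * complex_of_real (exp (- (s\<^sup>2 * vD + vX) / 2)))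
        = iexp mX * complex_of_real (exp (- vX / 2)) * complex_of_real (exp (- s\<^sup>2 * vD / 2))"
    proof -
      have "iexp (- s * mD) * iexp (s * mD + mX) = iexp mX" by (subst iexp_add[symmetric]) simp
      moreover have "exp (- (s\<^sup>2 * vD + vX) / 2) = exp (- vX / 2) * exp (- s\<^sup>2 * vD / 2)"
        by (simp add: exp_add[symmetric] field_simps)
      ultimately show ?thesis by (simp add: mult_ac)
    qed
    finally show ?thesis .
  qed
  define A where "A = iexp mX * complex_of_real (exp (- vX / 2))"
  have nA: "norm A \<le> 1" using vX0 by (simp add: A_def norm_mult norm_exp_i_times)
  define Z0 where "Z0 = (CLINT \<omega>|M. complex_of_real (D \<omega>) * iexp (X \<omega>))"
  have ie: "integrable M (\<lambda>\<omega>. iexp (f \<omega>))" if "f \<in> borel_measurable M" for f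
    by (rule Bochner_Integration.integrable_bound[of _ "\<lambda>_. 1::real"]) (use that in \<open>auto simp: norm_exp_i_times\<close>)
  have bnd: "h * norm Z0 \<le> h\<^sup>2 * vD" if h: "h > 0" for h
  proof -
    define R where "R \<omega> = (iexp (h * D \<omega>) - 1 - \<i> * complex_of_real (h * D \<omega>)) * iexp (X \<omega>)" for \<omega>
    have iZ: "integrable M (\<lambda>\<omega>. complex_of_real (D \<omega>) * iexp (X \<omega>))"
      by (rule Bochner_Integration.integrable_bound[OF iD]) (auto simp: norm_mult norm_exp_i_times)
    have i1: "integrable M (\<lambda>\<omega>. iexp (h * D \<omega> + X \<omega>))" by (rule ie) measurable
    have i2: "integrable M (\<lambda>\<omega>. iexp (X \<omega>))" by (rule ie) measurable
    have ER: "(CLINT \<omega>|M. R \<omega>) = (CLINT \<omega>|M. iexp (h * D \<omega> + X \<omega>)) - (CLINT \<omega>|M. iexp (0 * D \<omega> + X \<omega>)) - \<i> * h * Z0"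
    proof -
      have "(CLINT \<omega>|M. R \<omega>) = (CLINT \<omega>|M. iexp (h * D \<omega> + X \<omega>) - iexp (X \<omega>) - (\<i> * h) * (complex_of_real (D \<omega>) * iexp (X \<omega>)))"
      proof (rule Bochner_Integration.integral_cong[OF refl])
        fix \<omega>
        have e: "iexp (h * D \<omega> + X \<omega>) = iexp (h * D \<omega>) * iexp (X \<omega>)" by (rule iexp_add)
        show "R \<omega> = iexp (h * D \<omega> + X \<omega>) - iexp (X \<omega>) - (\<i> * h) * (complex_of_real (D \<omega>) * iexp (X \<omega>))"
          by (simp only: R_def e) (simp add: algebra_simps)
      qed
      also have "\<dots> = (CLINT \<omega>|M. iexp (h * D \<omega> + X \<omega>)) - (CLINT \<omega>|M. iexp (X \<omega>)) - \<i> * h * Z0"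
        using i1 i2 iZ by (simp add: Z0_def)
      finally show ?thesis by simp
    qed
    hence ER': "(CLINT \<omega>|M. R \<omega>) = A * complex_of_real (exp (- h\<^sup>2 * vD / 2) - 1) - \<i> * h * Z0"
      unfolding chs A_def by (simp add: algebra_simps)
    have "norm (CLINT \<omega>|M. R \<omega>) \<le> (\<integral>\<omega>. norm (R \<omega>) \<partial>M)" by (rule integral_norm_bound)
    also have "\<dots> \<le> (\<integral>\<omega>. h\<^sup>2 * (D \<omega>)\<^sup>2 / 2 \<partial>M)"
    proof (rule integral_mono')
      show "integrable M (\<lambda>\<omega>. h\<^sup>2 * (D \<omega>)\<^sup>2 / 2)" using iD2 by auto
      fix \<omega> show "0 \<le> h\<^sup>2 * (D \<omega>)\<^sup>2 / 2" by simp
      have "norm (R \<omega>) = cmod (iexp (h * D \<omega>) - 1 - \<i> * complex_of_real (h * D \<omega>))"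
        by (simp only: R_def norm_mult norm_exp_i_times mult_1_right)
      also have "\<dots> \<le> (h * D \<omega>)\<^sup>2 / 2" by (rule norm_iexp_sub_lin)
      finally show "norm (R \<omega>) \<le> h\<^sup>2 * (D \<omega>)\<^sup>2 / 2" by (simp add: power_mult_distrib)
    qed
    also have "\<dots> = h\<^sup>2 * vD / 2" by (simp add: vD_def)
    finally have n1: "norm (A * complex_of_real (exp (- h\<^sup>2 * vD / 2) - 1) - \<i> * h * Z0) \<le> h\<^sup>2 * vD / 2"
      using ER' by simp
    have n2: "norm (A * complex_of_real (exp (- h\<^sup>2 * vD / 2) - 1)) \<le> h\<^sup>2 * vD / 2"
    proof -
      have a: "exp (- h\<^sup>2 * vD / 2) = exp (- (h\<^sup>2 * vD / 2))" by simp
      have "norm (A * complex_of_real (exp (- h\<^sup>2 * vD / 2) - 1)) = norm A * \<bar>exp (- h\<^sup>2 * vD / 2) - 1\<bar>"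
        by (simp only: norm_mult norm_of_real)
      also have "\<dots> = norm A * \<bar>exp (- (h\<^sup>2 * vD / 2)) - 1\<bar>" by (simp only: a)
      also have "\<dots> \<le> 1 * (h\<^sup>2 * vD / 2)"
        by (rule mult_mono[OF nA exp_neg_sub1_bound]) (use vD0 in auto)
      finally show ?thesis by simp
    qed
    have "norm (\<i> * h * Z0) \<le> norm (A * complex_of_real (exp (- h\<^sup>2 * vD / 2) - 1)) + norm (A * complex_of_real (exp (- h\<^sup>2 * vD / 2) - 1) - \<i> * h * Z0)"
      using norm_triangle_ineq4[of "A * complex_of_real (exp (- h\<^sup>2 * vD / 2) - 1)" "A * complex_of_real (exp (- h\<^sup>2 * vD / 2) - 1) - \<i> * h * Z0"]
      by (simp only: diff_diff_eq2 add_diff_cancel_left')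
    also have "\<dots> \<le> h\<^sup>2 * vD" using n1 n2 by simp
    finally show ?thesis using h by (simp add: norm_mult)
  qed
  have "Z0 = 0"
  proof (rule ccontr)
    assume nz: "Z0 \<noteq> 0"
    hence nZ: "norm Z0 > 0" by simp
    define h where "h = norm Z0 / (2 * vD + 1)"
    have hpos: "h > 0" using nZ vD0 by (simp add: h_def)
    have "h * norm Z0 \<le> h\<^sup>2 * vD" by (rule bnd[OF hpos])
    hence "norm Z0 \<le> h * vD" using hpos by (simp add: power2_eq_square mult.assoc)
    also have "h * vD < norm Z0"
    proof -
      have "h * vD = norm Z0 * (vD / (2 * vD + 1))" by (simp add: h_def)
      also have "\<dots> < norm Z0 * 1" using nZ vD0 by (intro mult_strict_left_mono) auto
      finally show ?thesis by simp
    qed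
    finally show False by simp
  qed
  thus ?thesis by (simp add: Z0_def D_def mD_def)
qed

lemma indep_var_pair:
  assumes P: "prob_space M" and ind: "prob_space.indep_vars M M' X I"
    and ij: "i \<in> I" "j \<in> I" "i \<noteq> j"
  shows "prob_space.indep_var M (M' i) (X i) (M' j) (X j)"
proof -
  interpret prob_space M by fact
  have "indep_var (PiM {i} M') (\<lambda>\<omega>. restrict (\<lambda>k. X k \<omega>) {i}) (PiM {j} M') (\<lambda>\<omega>. restrict (\<lambda>k. X k \<omega>) {j})"
    by (rule indep_var_restrict[OF ind]) (use ij in auto)
  hence "indep_var (M' i) ((\<lambda>f. f i) \<circ> (\<lambda>\<omega>. restrict (\<lambda>k. X k \<omega>) {i})) (M' j) ((\<lambda>f. f j) \<circ> (\<lambda>\<omega>. restrict (\<lambda>k. X k \<omega>) {j}))"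
    by (rule indep_var_compose) (auto intro!: measurable_component_singleton)
  moreover have "(\<lambda>f. f i) \<circ> (\<lambda>\<omega>. restrict (\<lambda>k. X k \<omega>) {i}) = X i" by (auto simp: fun_eq_iff)
  moreover have "(\<lambda>f. f j) \<circ> (\<lambda>\<omega>. restrict (\<lambda>k. X k \<omega>) {j}) = X j" by (auto simp: fun_eq_iff)
  ultimately show ?thesis by simp
qed

lemma indep_set_sub:
  assumes P: "prob_space M" and ind: "prob_space.indep_set M F G" and sub: "F' \<subseteq> F" "G' \<subseteq> G"
  shows "prob_space.indep_set M F' G'"
proof -
  interpret prob_space M by fact
  have "indep_sets (case_bool F G) UNIV" using ind by (simp add: indep_set_def)
  hence "indep_sets (case_bool F' G') UNIV"
    by (rule indep_sets_mono_sets) (use sub in \<open>auto split: bool.split\<close>)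
  thus ?thesis by (simp add: indep_set_def)
qed

lemma indep_var_from_sets:
  assumes P: "prob_space M" and ind: "prob_space.indep_set M F G"
    and Xm: "X \<in> borel_measurable M" and Ym: "Y \<in> borel_measurable M"
    and XF: "sigma_sets (space M) {X -` A \<inter> space M | A. A \<in> sets borel} \<subseteq> F"
    and YG: "sigma_sets (space M) {Y -` A \<inter> space M | A. A \<in> sets borel} \<subseteq> G"
  shows "prob_space.indep_var M borel X borel Y"
proof -
  interpret prob_space M by fact
  show ?thesis unfolding indep_var_eq using Xm Ym indep_set_sub[OF P ind XF YG] by simp
qed

lemma obs_index_Sigma: "obs_index N y = Sigma {..<N} y"
  by (auto simp: obs_index_def)

lemma sum_obs_fst:
  assumes fin: "finite (obs_index N y)" and n: "n < N"
  shows "(\<Sum>k\<in>obs_index N y. if fst k = n then f (snd k) else 0) = (\<Sum>s\<in>y n. f s)"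
proof -
  have "(\<Sum>k\<in>obs_index N y. if fst k = n then f (snd k) else 0) = (\<Sum>k\<in>{k\<in>obs_index N y. fst k = n}. f (snd k))"
    using fin by (simp add: sum.inter_filter)
  also have "{k\<in>obs_index N y. fst k = n} = (\<lambda>s. (n, s)) ` y n" using n by (auto simp: obs_index_def)
  also have "(\<Sum>k\<in>(\<lambda>s. (n, s)) ` y n. f (snd k)) = (\<Sum>s\<in>y n. f s)"
    by (subst sum.reindex) (auto simp: inj_on_def)
  finally show ?thesis .
qed

lemma co_count_sum:
  assumes finr: "finite r"
  shows "(\<Sum>s\<in>r. \<Sum>t\<in>r. real (co_count N y s t) * \<psi> s t) = (\<Sum>n<N. \<Sum>s\<in>y n \<inter> r. \<Sum>t\<in>y n \<inter> r. \<psi> s t)"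
proof -
  have cc: "real (co_count N y s t) = (\<Sum>n<N. if s \<in> y n \<and> t \<in> y n then 1 else 0)" for s t
  proof -
    have "{n. n < N \<and> s \<in> y n \<and> t \<in> y n} = {n\<in>{..<N}. s \<in> y n \<and> t \<in> y n}" by auto
    hence "co_count N y s t = card {n\<in>{..<N}. s \<in> y n \<and> t \<in> y n}" by (simp add: co_count_def)
    also have "\<dots> = (\<Sum>n\<in>{n\<in>{..<N}. s \<in> y n \<and> t \<in> y n}. 1)" by simp
    finally have "real (co_count N y s t) = (\<Sum>n\<in>{n\<in>{..<N}. s \<in> y n \<and> t \<in> y n}. 1)" by simp
    also have "\<dots> = (\<Sum>n<N. if s \<in> y n \<and> t \<in> y n then 1 else 0)" by (rule sum.inter_filter) simp
    finally show ?thesis .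
  qed
  have "(\<Sum>s\<in>r. \<Sum>t\<in>r. real (co_count N y s t) * \<psi> s t) = (\<Sum>s\<in>r. \<Sum>t\<in>r. \<Sum>n<N. if s \<in> y n \<and> t \<in> y n then \<psi> s t else 0)"
    unfolding cc sum_distrib_right by (intro sum.cong refl) simp
  also have "\<dots> = (\<Sum>s\<in>r. \<Sum>n<N. \<Sum>t\<in>r. if s \<in> y n \<and> t \<in> y n then \<psi> s t else 0)"
    by (rule sum.cong[OF refl]) (rule sum.swap)
  also have "\<dots> = (\<Sum>n<N. \<Sum>s\<in>r. \<Sum>t\<in>r. if s \<in> y n \<and> t \<in> y n then \<psi> s t else 0)"
    by (rule sum.swap)
  also have "\<dots> = (\<Sum>n<N. \<Sum>s\<in>y n \<inter> r. \<Sum>t\<in>y n \<inter> r. \<psi> s t)"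
  proof (rule sum.cong[OF refl])
    fix n
    have "(\<Sum>s\<in>r. \<Sum>t\<in>r. if s \<in> y n \<and> t \<in> y n then \<psi> s t else 0)
        = (\<Sum>s\<in>r. if s \<in> y n then (\<Sum>t\<in>r. if t \<in> y n then \<psi> s t else 0) else 0)"
      by (intro sum.cong refl) auto
    also have "\<dots> = (\<Sum>s\<in>r \<inter> y n. (\<Sum>t\<in>r. if t \<in> y n then \<psi> s t else 0))"
      using finr by (simp add: sum.inter_restrict)
    also have "\<dots> = (\<Sum>s\<in>r \<inter> y n. \<Sum>t\<in>r \<inter> y n. \<psi> s t)"
      using finr by (simp add: sum.inter_restrict)
    finally show "(\<Sum>s\<in>r. \<Sum>t\<in>r. if s \<in> y n \<and> t \<in> y n then \<psi> s t else 0) = (\<Sum>s\<in>y n \<inter> r. \<Sum>t\<in>y n \<inter> r. \<psi> s t)"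
      by (simp add: Int_commute)
  qed
  finally show ?thesis .
qed

theorem lemmaA1:
  fixes M :: "'a measure"
    and S :: "'s set" and N :: nat and y :: "nat \<Rightarrow> 's set"
    and \<theta> :: "'s \<Rightarrow> 'a \<Rightarrow> real" and \<epsilon> :: "nat \<Rightarrow> 's \<Rightarrow> 'a \<Rightarrow> real"
    and \<mu> \<tau> :: real and \<sigma> \<psi> :: "'s \<Rightarrow> 's \<Rightarrow> real"
    and r :: "'s set" and g :: "(nat \<times> 's \<Rightarrow> real) \<Rightarrow> real"
  assumes prob: "prob_space M"
    and finS: "finite S"
    and routes: "\<And>n. n < N \<Longrightarrow> y n \<subseteq> S \<and> y n \<noteq> {}"
    \<comment> \<open>theta i.i.d. with mean mu and variance tau^2 > 0\<close>
    and tau_pos: "\<tau> > 0"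
    and theta_indep: "prob_space.indep_vars M (\<lambda>_. borel) \<theta> S"
    and theta_ident: "\<And>s t. s \<in> S \<Longrightarrow> t \<in> S \<Longrightarrow> distr M borel (\<theta> s) = distr M borel (\<theta> t)"
    and theta_mean: "\<And>s. s \<in> S \<Longrightarrow> prob_space.expectation M (\<theta> s) = \<mu>"
    and theta_var: "\<And>s. s \<in> S \<Longrightarrow> prob_space.variance M (\<theta> s) = \<tau>\<^sup>2"
    \<comment> \<open>theta independent of the errors\<close>
    and theta_eps_indep: "prob_space.indep_set M
        (sigma_sets (space M) (\<Union>s\<in>S. {\<theta> s -` A \<inter> space M | A. A \<in> sets borel}))
        (sigma_sets (space M) (\<Union>(n, s)\<in>obs_index N y. {\<epsilon> n s -` A \<inter> space M | A. A \<in> sets borel}))"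
    \<comment> \<open>errors of each trip: mean 0, covariances sigma\<close>
    and eps_mean: "\<And>n s. n < N \<Longrightarrow> s \<in> y n \<Longrightarrow> prob_space.expectation M (\<epsilon> n s) = 0"
    and eps_cov: "\<And>n s t. n < N \<Longrightarrow> s \<in> y n \<Longrightarrow> t \<in> y n \<Longrightarrow>
        prob_space.expectation M (\<lambda>\<omega>. \<epsilon> n s \<omega> * \<epsilon> n t \<omega>) = \<sigma> s t"
    \<comment> \<open>errors from different trips independent\<close>
    and eps_indep: "prob_space.indep_vars M (\<lambda>n. PiM (y n) (\<lambda>_. borel))
        (\<lambda>n \<omega>. restrict (\<lambda>s. \<epsilon> n s \<omega>) (y n)) {..<N}"
    \<comment> \<open>errors and theta jointly Gaussian\<close>
    and gauss: "jointly_gaussian M (Inl ` S \<union> Inr ` obs_index N y)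
        (\<lambda>i \<omega>. case i of Inl s \<Rightarrow> \<theta> s \<omega> | Inr (n, s) \<Rightarrow> \<epsilon> n s \<omega>)"
    \<comment> \<open>[sigma] is a covariance matrix on S (symmetric, positive semidefinite)\<close>
    and sigma_sym: "\<And>s t. s \<in> S \<Longrightarrow> t \<in> S \<Longrightarrow> \<sigma> s t = \<sigma> t s"
    and sigma_psd: "\<And>c. (\<Sum>s\<in>S. \<Sum>t\<in>S. c s * \<sigma> s t * c t) \<ge> 0"
    \<comment> \<open>Psi is its inverse (precision matrix)\<close>
    and psi_inv1: "\<And>s t. s \<in> S \<Longrightarrow> t \<in> S \<Longrightarrow> (\<Sum>u\<in>S. \<sigma> s u * \<psi> u t) = (if s = t then 1 else 0)"
    and psi_inv2: "\<And>s t. s \<in> S \<Longrightarrow> t \<in> S \<Longrightarrow> (\<Sum>u\<in>S. \<psi> s u * \<sigma> u t) = (if s = t then 1 else 0)"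
    \<comment> \<open>a route r and an optimal estimator for it\<close>
    and route: "r \<subseteq> S" "r \<noteq> {}"
    and opt: "optimal_estimator M N y \<theta> \<epsilon> r g"
  shows "ennreal (real (card r) ^ 2 /
           ((\<Sum>s\<in>r. \<Sum>t\<in>r. real (co_count N y s t) * \<psi> s t) + real (card r) / \<tau>\<^sup>2))
         \<le> integrated_risk M N y \<theta> \<epsilon> r g"
proof -
  interpret prob_space M by (rule prob)
  define K where "K = obs_index N y"
  have K_Sigma: "K = Sigma {..<N} y" by (simp add: K_def obs_index_Sigma)
  have KS: "K \<subseteq> {..<N} \<times> S" using routes by (auto simp: K_def obs_index_def)
  have finK: "finite K" by (rule finite_subset[OF KS]) (use finS in simp)
  have finyn: "finite (y n)" if "n < N" for n using routes[OF that] finS finite_subset by blast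
  have finr: "finite r" using route(1) finS finite_subset by blast
  define I where "I = Inl ` S \<union> Inr ` K"
  have finI: "finite I" using finS finK by (simp add: I_def)
  define XX where "XX = (\<lambda>(i::'s + nat \<times> 's) \<omega>. case i of Inl s \<Rightarrow> \<theta> s \<omega> | Inr (n, s) \<Rightarrow> \<epsilon> n s \<omega>)"
  define lc where "lc c \<omega> = (\<Sum>i\<in>I. c i * XX i \<omega>)" for c \<omega>
  have sumI: "(\<Sum>i\<in>I. f i) = (\<Sum>s\<in>S. f (Inl s)) + (\<Sum>k\<in>K. f (Inr k))" for f :: "'s + nat \<times> 's \<Rightarrow> real"
  proof -
    have "(\<Sum>i\<in>I. f i) = (\<Sum>i\<in>Inl ` S. f i) + (\<Sum>i\<in>Inr ` K. f i)"
      unfolding I_def by (rule sum.union_disjoint) (use finS finK in auto)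
    also have "\<dots> = (\<Sum>s\<in>S. f (Inl s)) + (\<Sum>k\<in>K. f (Inr k))"
      by (simp add: sum.reindex)
    finally show ?thesis .
  qed
  have finI': "finite (Inl ` S \<union> Inr ` obs_index N y)" using finI by (simp add: I_def K_def)
  have glc: "gaussian_rv M (lc c)" for c
    using gauss[unfolded jointly_gaussian_def, rule_format, OF finI' order_refl, of c]
    by (simp add: lc_def[abs_def] I_def K_def XX_def)
  have lcm[measurable]: "lc c \<in> borel_measurable M" for c using glc[of c] by (simp add: gaussian_rv_def)
  have lci: "integrable M (lc c)" for c using gaussian_rv_integrable(1)[OF prob glc] .
  have lci2: "integrable M (\<lambda>\<omega>. (lc c \<omega>)\<^sup>2)" for c using gaussian_rv_integrable(2)[OF prob glc] .
  have prod_int: "integrable M (\<lambda>\<omega>. F \<omega> * G \<omega>)"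
    if "F \<in> borel_measurable M" "G \<in> borel_measurable M" "integrable M (\<lambda>\<omega>. (F \<omega>)\<^sup>2)" "integrable M (\<lambda>\<omega>. (G \<omega>)\<^sup>2)"
    for F G :: "'a \<Rightarrow> real"
    by (rule Bochner_Integration.integrable_bound[of _ "\<lambda>\<omega>. (F \<omega>)\<^sup>2 + (G \<omega>)\<^sup>2"])
       (use that in \<open>auto intro!: AE_I2 abs_prod_le_sq\<close>)
  have lcii: "integrable M (\<lambda>\<omega>. lc a \<omega> * lc b \<omega>)" for a b by (rule prod_int) (auto intro: lci2)
  have XX_lc: "XX i = lc (\<lambda>j. if j = i then 1 else 0)" if "i \<in> I" for i
  proof
    fix \<omega>
    have "lc (\<lambda>j. if j = i then 1 else 0) \<omega> = (\<Sum>j\<in>I. if j = i then XX j \<omega> else 0)"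
      unfolding lc_def by (rule sum.cong) auto
    also have "\<dots> = XX i \<omega>" using that finI by (simp add: sum.delta')
    finally show "XX i \<omega> = lc (\<lambda>j. if j = i then 1 else 0) \<omega>" by simp
  qed
  have XXm[measurable]: "XX i \<in> borel_measurable M" if "i \<in> I" for i using XX_lc[OF that] by simp
  have XXi: "integrable M (XX i)" if "i \<in> I" for i using XX_lc[OF that] lci by simp
  have XXi2: "integrable M (\<lambda>\<omega>. (XX i \<omega>)\<^sup>2)" if "i \<in> I" for i using XX_lc[OF that] lci2 by simp
  have XXii: "integrable M (\<lambda>\<omega>. XX i \<omega> * XX j \<omega>)" if "i \<in> I" "j \<in> I" for i j
    by (rule prod_int) (use that XXm XXi2 in auto)
  have InlI: "Inl s \<in> I" if "s \<in> S" for s using that by (simp add: I_def)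
  have InrI: "Inr k \<in> I" if "k \<in> K" for k using that by (simp add: I_def)
  have XXl: "XX (Inl s) = \<theta> s" for s by (simp add: XX_def)
  have XXr: "XX (Inr (n, t)) = \<epsilon> n t" for n t by (simp add: XX_def)
  have thM[measurable]: "\<theta> s \<in> borel_measurable M" if "s \<in> S" for s using XXm[OF InlI[OF that]] by (simp add: XXl)
  have thi: "integrable M (\<theta> s)" if "s \<in> S" for s using XXi[OF InlI[OF that]] by (simp add: XXl)
  have thi2: "integrable M (\<lambda>\<omega>. (\<theta> s \<omega>)\<^sup>2)" if "s \<in> S" for s using XXi2[OF InlI[OF that]] by (simp add: XXl)
  have epm[measurable]: "\<epsilon> n t \<in> borel_measurable M" if "(n, t) \<in> K" for n t using XXm[OF InrI[OF that]] by (simp add: XXr)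
  have epi: "integrable M (\<epsilon> n t)" if "(n, t) \<in> K" for n t using XXi[OF InrI[OF that]] by (simp add: XXr)
  have th_th: "expectation (\<lambda>\<omega>. \<theta> s \<omega> * \<theta> t \<omega>) = (if s = t then \<tau>\<^sup>2 else 0) + \<mu> * \<mu>"
    if st: "s \<in> S" "t \<in> S" for s t
  proof (cases "s = t")
    case True
    have "variance (\<theta> s) = expectation (\<lambda>\<omega>. (\<theta> s \<omega>)\<^sup>2) - (expectation (\<theta> s))\<^sup>2"
      by (rule variance_eq[OF thi[OF st(1)] thi2[OF st(1)]])
    hence "expectation (\<lambda>\<omega>. (\<theta> s \<omega>)\<^sup>2) = \<tau>\<^sup>2 + \<mu> * \<mu>"
      using theta_var[OF st(1)] theta_mean[OF st(1)] by (simp add: power2_eq_square)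
    thus ?thesis using True by (simp add: power2_eq_square)
  next
    case False
    have iv: "indep_var borel (\<theta> s) borel (\<theta> t)"
      using indep_var_pair[OF prob theta_indep st False] by simp
    have "expectation (\<lambda>\<omega>. \<theta> s \<omega> * \<theta> t \<omega>) = expectation (\<theta> s) * expectation (\<theta> t)"
      by (rule indep_var_lebesgue_integral[OF iv thi[OF st(1)] thi[OF st(2)]])
    thus ?thesis using False theta_mean st by simp
  qed
  have th_ep: "expectation (\<lambda>\<omega>. \<theta> s \<omega> * \<epsilon> n t \<omega>) = 0" if s: "s \<in> S" and nt: "(n, t) \<in> K" for s n t
  proof -
    have iv: "indep_var borel (\<theta> s) borel (\<epsilon> n t)"
    proof (rule indep_var_from_sets[OF prob theta_eps_indep thM[OF s] epm[OF nt]])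
      show "sigma_sets (space M) {\<theta> s -` A \<inter> space M |A. A \<in> sets borel}
          \<subseteq> sigma_sets (space M) (\<Union>s\<in>S. {\<theta> s -` A \<inter> space M |A. A \<in> sets borel})"
        by (rule sigma_sets_mono') (use s in auto)
      show "sigma_sets (space M) {\<epsilon> n t -` A \<inter> space M |A. A \<in> sets borel}
          \<subseteq> sigma_sets (space M) (\<Union>(n, s)\<in>obs_index N y. {\<epsilon> n s -` A \<inter> space M |A. A \<in> sets borel})"
        by (rule sigma_sets_mono') (use nt in \<open>force simp: K_def\<close>)
    qed
    have "expectation (\<lambda>\<omega>. \<theta> s \<omega> * \<epsilon> n t \<omega>) = expectation (\<theta> s) * expectation (\<epsilon> n t)"
      by (rule indep_var_lebesgue_integral[OF iv thi[OF s] epi[OF nt]])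
    thus ?thesis using eps_mean nt by (simp add: K_def obs_index_def)
  qed
  have ep_ep: "expectation (\<lambda>\<omega>. \<epsilon> n s \<omega> * \<epsilon> n' t \<omega>) = (if n = n' then \<sigma> s t else 0)"
    if ns: "(n, s) \<in> K" and nt: "(n', t) \<in> K" for n s n' t
  proof (cases "n = n'")
    case True
    thus ?thesis using eps_cov ns nt by (simp add: K_def obs_index_def)
  next
    case False
    have nN: "n \<in> {..<N}" "n' \<in> {..<N}" using ns nt by (auto simp: K_def obs_index_def)
    have sy: "s \<in> y n" "t \<in> y n'" using ns nt by (auto simp: K_def obs_index_def)
    have iv0: "indep_var (PiM (y n) (\<lambda>_. borel)) (\<lambda>\<omega>. restrict (\<lambda>s. \<epsilon> n s \<omega>) (y n))
        (PiM (y n') (\<lambda>_. borel)) (\<lambda>\<omega>. restrict (\<lambda>s. \<epsilon> n' s \<omega>) (y n'))"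
      using indep_var_pair[OF prob eps_indep nN False] by simp
    have "indep_var borel ((\<lambda>f. f s) \<circ> (\<lambda>\<omega>. restrict (\<lambda>s. \<epsilon> n s \<omega>) (y n)))
        borel ((\<lambda>f. f t) \<circ> (\<lambda>\<omega>. restrict (\<lambda>s. \<epsilon> n' s \<omega>) (y n')))"
      by (rule indep_var_compose[OF iv0]) (use sy in \<open>auto intro!: measurable_component_singleton\<close>)
    moreover have "(\<lambda>f. f s) \<circ> (\<lambda>\<omega>. restrict (\<lambda>s. \<epsilon> n s \<omega>) (y n)) = \<epsilon> n s" using sy by (auto simp: fun_eq_iff)
    moreover have "(\<lambda>f. f t) \<circ> (\<lambda>\<omega>. restrict (\<lambda>s. \<epsilon> n' s \<omega>) (y n')) = \<epsilon> n' t" using sy by (auto simp: fun_eq_iff)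
    ultimately have iv: "indep_var borel (\<epsilon> n s) borel (\<epsilon> n' t)" by simp
    have "expectation (\<lambda>\<omega>. \<epsilon> n s \<omega> * \<epsilon> n' t \<omega>) = expectation (\<epsilon> n s) * expectation (\<epsilon> n' t)"
      by (rule indep_var_lebesgue_integral[OF iv epi[OF ns] epi[OF nt]])
    thus ?thesis using False eps_mean ns by (simp add: K_def obs_index_def)
  qed
  define m where "m i = (case i of Inl _ \<Rightarrow> \<mu> | Inr _ \<Rightarrow> 0)" for i :: "'s + nat \<times> 's"
  define C where "C i j = (case i of Inl s \<Rightarrow> (case j of Inl t \<Rightarrow> (if s = t then \<tau>\<^sup>2 else 0) | Inr _ \<Rightarrow> 0)
      | Inr k \<Rightarrow> (case j of Inl _ \<Rightarrow> 0 | Inr k' \<Rightarrow> (if fst k = fst k' then \<sigma> (snd k) (snd k') else 0)))"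
    for i j :: "'s + nat \<times> 's"
  have mean: "expectation (XX i) = m i" if "i \<in> I" for i
    using that theta_mean eps_mean by (auto simp: I_def XX_def m_def K_def obs_index_def)
  have mom2: "expectation (\<lambda>\<omega>. XX i \<omega> * XX j \<omega>) = C i j + m i * m j" if ij: "i \<in> I" "j \<in> I" for i j
  proof -
    consider (ll) s t where "s \<in> S" "t \<in> S" "i = Inl s" "j = Inl t"
      | (lr) s k where "s \<in> S" "k \<in> K" "i = Inl s" "j = Inr k"
      | (rl) k t where "k \<in> K" "t \<in> S" "i = Inr k" "j = Inl t"
      | (rr) k k' where "k \<in> K" "k' \<in> K" "i = Inr k" "j = Inr k'"
      using ij unfolding I_def by blast
    thus ?thesis
    proof cases
      case ll thus ?thesis using th_th[OF ll(1,2)] by (simp add: XXl C_def m_def)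
    next
      case lr
      obtain n t where k: "k = (n, t)" by (cases k)
      thus ?thesis using th_ep[OF lr(1)] lr by (simp add: XXl XXr C_def m_def)
    next
      case rl
      obtain n s where k: "k = (n, s)" by (cases k)
      have "expectation (\<lambda>\<omega>. \<epsilon> n s \<omega> * \<theta> t \<omega>) = expectation (\<lambda>\<omega>. \<theta> t \<omega> * \<epsilon> n s \<omega>)"
        by (simp add: mult.commute)
      thus ?thesis using th_ep[OF rl(2)] rl k by (simp add: XXl XXr C_def m_def)
    next
      case rr
      obtain n s where k: "k = (n, s)" by (cases k)
      obtain n' t where k': "k' = (n', t)" by (cases k')
      show ?thesis using ep_ep[of n s n' t] rr k k' by (simp add: XXr C_def m_def)
    qed
  qed
  have Elc: "expectation (lc c) = (\<Sum>i\<in>I. c i * m i)" for c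
  proof -
    have "expectation (lc c) = (\<Sum>i\<in>I. expectation (\<lambda>\<omega>. c i * XX i \<omega>))"
      unfolding lc_def by (rule Bochner_Integration.integral_sum) (use XXi in auto)
    also have "\<dots> = (\<Sum>i\<in>I. c i * m i)" by (rule sum.cong[OF refl]) (simp add: mean)
    finally show ?thesis .
  qed
  have Elc2: "expectation (\<lambda>\<omega>. lc a \<omega> * lc b \<omega>) = (\<Sum>i\<in>I. \<Sum>j\<in>I. a i * b j * (C i j + m i * m j))" for a b
  proof -
    have "expectation (\<lambda>\<omega>. lc a \<omega> * lc b \<omega>) = expectation (\<lambda>\<omega>. \<Sum>i\<in>I. \<Sum>j\<in>I. a i * b j * (XX i \<omega> * XX j \<omega>))"
      unfolding lc_def by (simp add: sum_product mult_ac)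
    also have "\<dots> = (\<Sum>i\<in>I. expectation (\<lambda>\<omega>. \<Sum>j\<in>I. a i * b j * (XX i \<omega> * XX j \<omega>)))"
      by (rule Bochner_Integration.integral_sum) (use XXii in auto)
    also have "\<dots> = (\<Sum>i\<in>I. \<Sum>j\<in>I. expectation (\<lambda>\<omega>. a i * b j * (XX i \<omega> * XX j \<omega>)))"
      by (rule sum.cong[OF refl], rule Bochner_Integration.integral_sum) (use XXii in auto)
    also have "\<dots> = (\<Sum>i\<in>I. \<Sum>j\<in>I. a i * b j * (C i j + m i * m j))"
      by (intro sum.cong refl) (simp add: mom2)
    finally show ?thesis .
  qed
  define Q where "Q a b = (\<Sum>i\<in>I. \<Sum>j\<in>I. a i * b j * C i j)" for a b :: "'s + nat \<times> 's \<Rightarrow> real"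
  have cov: "expectation (\<lambda>\<omega>. (lc a \<omega> - expectation (lc a)) * (lc b \<omega> - expectation (lc b))) = Q a b" for a b
  proof -
    define pa where "pa = expectation (lc a)"
    define pb where "pb = expectation (lc b)"
    have "expectation (\<lambda>\<omega>. (lc a \<omega> - pa) * (lc b \<omega> - pb)) = expectation (\<lambda>\<omega>. lc a \<omega> * lc b \<omega> - pb * lc a \<omega> - pa * lc b \<omega> + pa * pb)"
      by (rule Bochner_Integration.integral_cong) (auto simp: algebra_simps)
    also have "\<dots> = expectation (\<lambda>\<omega>. lc a \<omega> * lc b \<omega>) - pa * pb"
      using lcii[of a b] lci[of a] lci[of b] by (simp add: pa_def pb_def prob_space)
    also have "\<dots> = (\<Sum>i\<in>I. \<Sum>j\<in>I. a i * b j * C i j) + (\<Sum>i\<in>I. \<Sum>j\<in>I. a i * b j * (m i * m j)) - pa * pb"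
      unfolding Elc2 by (simp add: distrib_left sum.distrib)
    also have "(\<Sum>i\<in>I. \<Sum>j\<in>I. a i * b j * (m i * m j)) = pa * pb"
      unfolding pa_def pb_def Elc by (simp add: sum_product mult_ac)
    finally show ?thesis by (simp add: Q_def pa_def pb_def)
  qed
  have colL: "(\<Sum>i\<in>I. a i * C i (Inl t)) = a (Inl t) * \<tau>\<^sup>2" if t: "t \<in> S" for a t
  proof -
    have "(\<Sum>i\<in>I. a i * C i (Inl t)) = (\<Sum>s\<in>S. a (Inl s) * (if s = t then \<tau>\<^sup>2 else 0)) + (\<Sum>k\<in>K. a (Inr k) * 0)"
      unfolding sumI by (simp add: C_def)
    also have "\<dots> = (\<Sum>s\<in>S. if s = t then a (Inl s) * \<tau>\<^sup>2 else 0)" by (simp add: if_distrib cong: if_cong)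
    also have "\<dots> = a (Inl t) * \<tau>\<^sup>2" using t finS by (simp add: sum.delta')
    finally show ?thesis .
  qed
  have colR: "(\<Sum>i\<in>I. a i * C i (Inr k)) = (\<Sum>s\<in>y (fst k). a (Inr (fst k, s)) * \<sigma> s (snd k))" if k: "k \<in> K" for a k
  proof -
    have "(\<Sum>i\<in>I. a i * C i (Inr k)) = (\<Sum>s\<in>S. a (Inl s) * 0) + (\<Sum>k'\<in>K. a (Inr k') * (if fst k' = fst k then \<sigma> (snd k') (snd k) else 0))"
      unfolding sumI by (simp add: C_def)
    also have "\<dots> = (\<Sum>k'\<in>K. if fst k' = fst k then a (Inr (fst k, snd k')) * \<sigma> (snd k') (snd k) else 0)"
      by (simp, intro sum.cong refl) auto
    also have "\<dots> = (\<Sum>s\<in>y (fst k). a (Inr (fst k, s)) * \<sigma> s (snd k))"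
      unfolding K_def by (rule sum_obs_fst) (use finK k in \<open>auto simp: K_def obs_index_def\<close>)
    finally show ?thesis .
  qed
  have Qform: "Q a b = (\<Sum>t\<in>S. b (Inl t) * (a (Inl t) * \<tau>\<^sup>2)) + (\<Sum>k\<in>K. b (Inr k) * (\<Sum>s\<in>y (fst k). a (Inr (fst k, s)) * \<sigma> s (snd k)))" for a b
  proof -
    have "Q a b = (\<Sum>j\<in>I. b j * (\<Sum>i\<in>I. a i * C i j))"
      unfolding Q_def by (subst sum.swap) (simp add: sum_distrib_left mult_ac)
    also have "\<dots> = (\<Sum>t\<in>S. b (Inl t) * (\<Sum>i\<in>I. a i * C i (Inl t))) + (\<Sum>k\<in>K. b (Inr k) * (\<Sum>i\<in>I. a i * C i (Inr k)))"
      by (rule sumI)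
    also have "\<dots> = (\<Sum>t\<in>S. b (Inl t) * (a (Inl t) * \<tau>\<^sup>2)) + (\<Sum>k\<in>K. b (Inr k) * (\<Sum>s\<in>y (fst k). a (Inr (fst k, s)) * \<sigma> s (snd k)))"
      by (intro arg_cong2[where f = "(+)"] sum.cong refl) (simp_all add: colL colR)
    finally show ?thesis .
  qed
  have yS: "y n \<subseteq> S" if "n < N" for n using routes[OF that] by blast
  have "\<forall>n\<in>{..<N}. \<exists>bn. \<forall>s\<in>y n. (\<Sum>t\<in>y n. \<sigma> s t * bn t) = (if s \<in> r then 1 else 0)"
  proof
    fix n assume "n \<in> {..<N}"
    hence n: "n < N" by simp
    have sym: "\<forall>s\<in>y n. \<forall>t\<in>y n. \<sigma> s t = \<sigma> t s" using sigma_sym yS[OF n] by blast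
    have pd: "\<forall>c. (\<exists>s\<in>y n. c s \<noteq> 0) \<longrightarrow> (\<Sum>s\<in>y n. \<Sum>t\<in>y n. c s * \<sigma> s t * c t) > 0"
      using pd_subset[OF finS yS[OF n] sigma_sym sigma_psd psi_inv2] by blast
    show "\<exists>bn. \<forall>s\<in>y n. (\<Sum>t\<in>y n. \<sigma> s t * bn t) = (if s \<in> r then 1 else 0)"
      using pd_solve[OF finyn[OF n], of \<sigma> "\<lambda>s. if s \<in> r then 1 else 0"] sym pd by blast
  qed
  from bchoice[OF this] obtain b where bsol: "\<And>n s. n < N \<Longrightarrow> s \<in> y n \<Longrightarrow> (\<Sum>t\<in>y n. \<sigma> s t * b n t) = (if s \<in> r then 1 else 0)"
    by auto
  have bsol': "(\<Sum>s\<in>y n. b n s * \<sigma> s t) = (if t \<in> r then 1 else 0)" if "n < N" "t \<in> y n" for n t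
  proof -
    have "(\<Sum>s\<in>y n. b n s * \<sigma> s t) = (\<Sum>s\<in>y n. \<sigma> t s * b n s)"
    proof (rule sum.cong[OF refl])
      fix s assume s: "s \<in> y n"
      have "\<sigma> s t = \<sigma> t s" using sigma_sym yS[OF that(1)] s that(2) by blast
      thus "b n s * \<sigma> s t = \<sigma> t s * b n s" by simp
    qed
    thus ?thesis using bsol[OF that] by simp
  qed
  define d where "d i = (case i of Inl s \<Rightarrow> (if s \<in> r then 1 / \<tau>\<^sup>2 else 0) | Inr k \<Rightarrow> - b (fst k) (snd k))" for i
  define z where "z i = (case i of Inl s \<Rightarrow> (if s \<in> r then 1 else 0) | Inr (k :: nat \<times> 's) \<Rightarrow> (0::real))" for i
  define e where "e k i = (if i = Inl (snd k) then 1 else 0) + (if i = Inr k then 1 else (0::real))" for k :: "nat \<times> 's" and i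
  define Tk where "Tk k \<omega> = \<theta> (snd k) \<omega> + \<epsilon> (fst k) (snd k) \<omega>" for k \<omega>
  have kK: "fst k < N" "snd k \<in> y (fst k)" "snd k \<in> S" if "k \<in> K" for k
    using that yS by (auto simp: K_def obs_index_def) blast
  have Tk_lc: "Tk k = lc (e k)" if k: "k \<in> K" for k
  proof
    fix \<omega>
    have "lc (e k) \<omega> = (\<Sum>i\<in>I. (if i = Inl (snd k) then 1 else 0) * XX i \<omega>) + (\<Sum>i\<in>I. (if i = Inr k then 1 else 0) * XX i \<omega>)"
      unfolding lc_def e_def by (simp only: distrib_right sum.distrib)
    also have "\<dots> = (\<Sum>i\<in>I. if i = Inl (snd k) then XX i \<omega> else 0) + (\<Sum>i\<in>I. if i = Inr k then XX i \<omega> else 0)"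
      by (intro arg_cong2[where f="(+)"] sum.cong refl) simp_all
    also have "\<dots> = XX (Inl (snd k)) \<omega> + XX (Inr k) \<omega>"
      using finI InlI[OF kK(3)[OF k]] InrI[OF k] by (simp add: sum.delta')
    also have "\<dots> = Tk k \<omega>" by (cases k) (simp add: XX_def Tk_def)
    finally show "Tk k \<omega> = lc (e k) \<omega>" by simp
  qed
  have Z_lc: "(\<lambda>\<omega>. \<Sum>s\<in>r. \<theta> s \<omega>) = lc z"
  proof
    fix \<omega>
    have "lc z \<omega> = (\<Sum>s\<in>S. z (Inl s) * XX (Inl s) \<omega>) + (\<Sum>k\<in>K. z (Inr k) * XX (Inr k) \<omega>)"
      unfolding lc_def by (rule sumI)
    also have "(\<Sum>k\<in>K. z (Inr k) * XX (Inr k) \<omega>) = 0" by (simp add: z_def)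
    also have "(\<Sum>s\<in>S. z (Inl s) * XX (Inl s) \<omega>) = (\<Sum>s\<in>S. if s \<in> r then \<theta> s \<omega> else 0)"
      by (rule sum.cong) (simp_all add: z_def XX_def)
    also have "\<dots> = (\<Sum>s\<in>r. \<theta> s \<omega>)" by (rule sum_if_subset[OF finS route(1)])
    finally show "(\<Sum>s\<in>r. \<theta> s \<omega>) = lc z \<omega>" by simp
  qed
  have tau2: "\<tau>\<^sup>2 > 0" using tau_pos by simp
  have Qde: "Q d (e k) = 0" if k: "k \<in> K" for k
  proof -
    have A: "(\<Sum>t\<in>S. e k (Inl t) * (d (Inl t) * \<tau>\<^sup>2)) = (if snd k \<in> r then 1 else 0)"
    proof -
      have "(\<Sum>t\<in>S. e k (Inl t) * (d (Inl t) * \<tau>\<^sup>2)) = (\<Sum>t\<in>S. if t = snd k then d (Inl t) * \<tau>\<^sup>2 else 0)"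
        by (rule sum.cong[OF refl]) (simp add: e_def)
      also have "\<dots> = d (Inl (snd k)) * \<tau>\<^sup>2" using finS kK(3)[OF k] by (simp add: sum.delta')
      finally show ?thesis using tau2 by (simp add: d_def)
    qed
    have B: "(\<Sum>k'\<in>K. e k (Inr k') * (\<Sum>s\<in>y (fst k'). d (Inr (fst k', s)) * \<sigma> s (snd k'))) = - (if snd k \<in> r then 1 else 0)"
    proof -
      have "(\<Sum>k'\<in>K. e k (Inr k') * (\<Sum>s\<in>y (fst k'). d (Inr (fst k', s)) * \<sigma> s (snd k')))
          = (\<Sum>k'\<in>K. if k' = k then (\<Sum>s\<in>y (fst k'). d (Inr (fst k', s)) * \<sigma> s (snd k')) else 0)"
        by (rule sum.cong[OF refl]) (auto simp: e_def)
      also have "\<dots> = (\<Sum>s\<in>y (fst k). d (Inr (fst k, s)) * \<sigma> s (snd k))" using finK k by (simp add: sum.delta')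
      also have "\<dots> = - (\<Sum>s\<in>y (fst k). b (fst k) s * \<sigma> s (snd k))" by (simp add: d_def sum_negf)
      also have "\<dots> = - (if snd k \<in> r then 1 else 0)" using bsol'[OF kK(1,2)[OF k]] by simp
      finally show ?thesis .
    qed
    show ?thesis unfolding Qform A B by simp
  qed
  have Qzd: "Q z d = real (card r)"
  proof -
    have "Q z d = (\<Sum>t\<in>S. d (Inl t) * (z (Inl t) * \<tau>\<^sup>2)) + (\<Sum>k\<in>K. d (Inr k) * (\<Sum>s\<in>y (fst k). z (Inr (fst k, s)) * \<sigma> s (snd k)))"
      by (rule Qform)
    also have "\<dots> = (\<Sum>t\<in>S. if t \<in> r then 1 else 0)"
      using tau2 by (simp add: d_def z_def) (rule sum.cong, auto)
    also have "\<dots> = (\<Sum>t\<in>r. 1)" by (rule sum_if_subset[OF finS route(1)])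
    finally show ?thesis by simp
  qed
  have Qdd: "Q d d = real (card r) / \<tau>\<^sup>2 + (\<Sum>n<N. \<Sum>t\<in>y n \<inter> r. b n t)"
  proof -
    have "Q d d = (\<Sum>t\<in>S. d (Inl t) * (d (Inl t) * \<tau>\<^sup>2)) + (\<Sum>k\<in>K. d (Inr k) * (\<Sum>s\<in>y (fst k). d (Inr (fst k, s)) * \<sigma> s (snd k)))"
      by (rule Qform)
    also have "(\<Sum>t\<in>S. d (Inl t) * (d (Inl t) * \<tau>\<^sup>2)) = (\<Sum>t\<in>S. if t \<in> r then 1 / \<tau>\<^sup>2 else 0)"
      by (rule sum.cong[OF refl]) (use tau2 in \<open>simp add: d_def power2_eq_square\<close>)
    also have "\<dots> = (\<Sum>t\<in>r. 1 / \<tau>\<^sup>2)" by (rule sum_if_subset[OF finS route(1)])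
    also have "(\<Sum>k\<in>K. d (Inr k) * (\<Sum>s\<in>y (fst k). d (Inr (fst k, s)) * \<sigma> s (snd k)))
        = (\<Sum>k\<in>K. b (fst k) (snd k) * (if snd k \<in> r then 1 else 0))"
    proof (rule sum.cong[OF refl])
      fix k assume k: "k \<in> K"
      have "(\<Sum>s\<in>y (fst k). d (Inr (fst k, s)) * \<sigma> s (snd k)) = - (\<Sum>s\<in>y (fst k). b (fst k) s * \<sigma> s (snd k))"
        by (simp add: d_def sum_negf)
      thus "d (Inr k) * (\<Sum>s\<in>y (fst k). d (Inr (fst k, s)) * \<sigma> s (snd k)) = b (fst k) (snd k) * (if snd k \<in> r then 1 else 0)"
        using bsol'[OF kK(1,2)[OF k]] by (simp add: d_def)
    qed
    also have "\<dots> = (\<Sum>n<N. \<Sum>t\<in>y n. b n t * (if t \<in> r then 1 else 0))"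
      unfolding K_Sigma by (subst sum.Sigma) (use finyn in \<open>auto simp: case_prod_beta\<close>)
    also have "\<dots> = (\<Sum>n<N. \<Sum>t\<in>y n \<inter> r. b n t)"
      by (rule sum.cong[OF refl]) (use finyn in \<open>simp add: sum.inter_restrict if_distrib cong: if_cong\<close>)
    finally show ?thesis by simp
  qed
  define den where "den = (\<Sum>s\<in>r. \<Sum>t\<in>r. real (co_count N y s t) * \<psi> s t) + real (card r) / \<tau>\<^sup>2"
  have Qdd_le: "Q d d \<le> den"
  proof -
    have "(\<Sum>n<N. \<Sum>t\<in>y n \<inter> r. b n t) \<le> (\<Sum>n<N. \<Sum>s\<in>y n \<inter> r. \<Sum>t\<in>y n \<inter> r. \<psi> s t)"
    proof (rule sum_mono)
      fix n assume "n \<in> {..<N}"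
      hence n: "n < N" by simp
      show "(\<Sum>t\<in>y n \<inter> r. b n t) \<le> (\<Sum>s\<in>y n \<inter> r. \<Sum>t\<in>y n \<inter> r. \<psi> s t)"
        by (rule quad_expand_bound[OF finS yS[OF n] sigma_sym sigma_psd psi_inv1 bsol[OF n]])
    qed
    thus ?thesis unfolding Qdd den_def co_count_sum[OF finr] by simp
  qed
  define D where "D \<omega> = lc d \<omega> - expectation (lc d)" for \<omega>
  have Dm[measurable]: "D \<in> borel_measurable M" unfolding D_def[abs_def] by measurable
  have Di: "integrable M D" unfolding D_def[abs_def] using lci[of d] by auto
  have Di2: "integrable M (\<lambda>\<omega>. (D \<omega>)\<^sup>2)"
  proof -
    have "integrable M (\<lambda>\<omega>. (lc d \<omega>)\<^sup>2 - 2 * expectation (lc d) * lc d \<omega> + (expectation (lc d))\<^sup>2)"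
      using lci2[of d] lci[of d] by auto
    thus ?thesis by (simp add: D_def power2_diff algebra_simps)
  qed
  have ED0: "expectation D = 0" unfolding D_def[abs_def] using lci[of d] by (simp add: prob_space)
  have Tkm[measurable]: "Tk k \<in> borel_measurable M" if "k \<in> K" for k using Tk_lc[OF that] by simp
  have Q_lin2: "Q a (\<lambda>i. \<Sum>k\<in>K. u k * f k i) = (\<Sum>k\<in>K. u k * Q a (f k))" for a u f
  proof -
    have "Q a (\<lambda>i. \<Sum>k\<in>K. u k * f k i) = (\<Sum>i\<in>I. \<Sum>j\<in>I. \<Sum>k\<in>K. u k * (a i * f k j * C i j))"
      unfolding Q_def by (intro sum.cong refl) (simp add: sum_distrib_left sum_distrib_right mult_ac)
    also have "\<dots> = (\<Sum>i\<in>I. \<Sum>k\<in>K. \<Sum>j\<in>I. u k * (a i * f k j * C i j))" by (rule sum.cong[OF refl], rule sum.swap)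
    also have "\<dots> = (\<Sum>k\<in>K. \<Sum>i\<in>I. \<Sum>j\<in>I. u k * (a i * f k j * C i j))" by (rule sum.swap)
    also have "\<dots> = (\<Sum>k\<in>K. u k * Q a (f k))" unfolding Q_def by (simp add: sum_distrib_left)
    finally show ?thesis .
  qed
  have chv: "(CLINT \<omega>|M. complex_of_real (D \<omega>) * iexp (\<Sum>k\<in>K. u k * Tk k \<omega>)) = 0" for u
  proof -
    define eu where "eu i = (\<Sum>k\<in>K. u k * e k i)" for i
    have X_lc: "(\<lambda>\<omega>. \<Sum>k\<in>K. u k * Tk k \<omega>) = lc eu"
    proof
      fix \<omega>
      have "(\<Sum>k\<in>K. u k * Tk k \<omega>) = (\<Sum>k\<in>K. u k * lc (e k) \<omega>)" by (rule sum.cong[OF refl]) (simp add: Tk_lc)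
      also have "\<dots> = (\<Sum>k\<in>K. \<Sum>i\<in>I. u k * e k i * XX i \<omega>)" by (simp add: lc_def sum_distrib_left mult_ac)
      also have "\<dots> = (\<Sum>i\<in>I. \<Sum>k\<in>K. u k * e k i * XX i \<omega>)" by (rule sum.swap)
      also have "\<dots> = lc eu \<omega>" by (simp add: lc_def eu_def sum_distrib_right)
      finally show "(\<Sum>k\<in>K. u k * Tk k \<omega>) = lc eu \<omega>" .
    qed
    have lin: "(\<lambda>\<omega>. s * lc d \<omega> + lc eu \<omega>) = lc (\<lambda>i. s * d i + eu i)" for s
      by (auto simp: lc_def fun_eq_iff sum.distrib sum_distrib_left distrib_right mult.assoc)
    have Qdeu: "Q d eu = 0" unfolding eu_def Q_lin2 using Qde by simp
    have "(CLINT \<omega>|M. complex_of_real (lc d \<omega> - expectation (lc d)) * iexp (lc eu \<omega>)) = 0"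
    proof (rule gauss_orth_char[OF prob])
      show "gaussian_rv M (\<lambda>\<omega>. s * lc d \<omega> + lc eu \<omega>)" for s unfolding lin by (rule glc)
      show "(\<integral>\<omega>. (lc d \<omega> - expectation (lc d)) * (lc eu \<omega> - expectation (lc eu)) \<partial>M) = 0"
        using cov[of d eu] Qdeu by simp
    qed
    thus ?thesis using X_lc by (simp add: D_def[abs_def] fun_eq_iff)
  qed
  have orth: "expectation (\<lambda>\<omega>. D \<omega> * h (\<lambda>k\<in>K. Tk k \<omega>)) = 0"
    if hm: "h \<in> borel_measurable (PiM K (\<lambda>_. borel))" and hb: "\<And>x. \<bar>h x\<bar> \<le> B" for h B
    by (rule fourier_multi[OF prob finK Dm Di Tkm chv hm hb])
  have obsF: "observations N y \<theta> \<epsilon> \<omega> = (\<lambda>k\<in>K. Tk k \<omega>)" for \<omega>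
    unfolding observations_def K_def by (rule restrict_ext) (auto simp: Tk_def)
  have gm[measurable]: "g \<in> borel_measurable (PiM K (\<lambda>_. borel))"
    using opt by (simp add: optimal_estimator_def estimators_def K_def)
  define F where "F \<omega> = (\<lambda>k\<in>K. Tk k \<omega>)" for \<omega>
  have Fm[measurable]: "F \<in> measurable M (PiM K (\<lambda>_. borel))" unfolding F_def by (rule measurable_restrict) (use Tkm in auto)
  define G where "G \<omega> = g (F \<omega>)" for \<omega>
  have Gm[measurable]: "G \<in> borel_measurable M" unfolding G_def[abs_def] by (rule measurable_compose[OF Fm gm])
  define Z where "Z = lc z"
  have Zm[measurable]: "Z \<in> borel_measurable M" by (simp add: Z_def)
  have risk: "integrated_risk M N y \<theta> \<epsilon> r g = (\<integral>\<^sup>+\<omega>. ennreal ((G \<omega> - Z \<omega>)\<^sup>2) \<partial>M)"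
    by (simp add: integrated_risk_def G_def F_def obsF Z_def Z_lc[symmetric])
  have den_eq: "(\<Sum>s\<in>r. \<Sum>t\<in>r. real (co_count N y s t) * \<psi> s t) + real (card r) / \<tau>\<^sup>2 = den" by (simp add: den_def)
  show ?thesis unfolding den_eq risk
  proof (cases "den \<le> 0")
    case True
    hence "real (card r) ^ 2 / den \<le> 0" by (simp add: divide_nonneg_nonpos)
    hence "ennreal (real (card r) ^ 2 / den) = 0" by (simp add: ennreal_neg)
    thus "ennreal (real (card r) ^ 2 / den) \<le> (\<integral>\<^sup>+\<omega>. ennreal ((G \<omega> - Z \<omega>)\<^sup>2) \<partial>M)" by simp
  next
    case False
    hence den_pos: "den > 0" by simp
    show "ennreal (real (card r) ^ 2 / den) \<le> (\<integral>\<^sup>+\<omega>. ennreal ((G \<omega> - Z \<omega>)\<^sup>2) \<partial>M)"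
    proof (cases "(\<integral>\<^sup>+\<omega>. ennreal ((G \<omega> - Z \<omega>)\<^sup>2) \<partial>M) = \<top>")
      case True thus ?thesis by simp
    next
      case False
      then obtain R where R: "(\<integral>\<^sup>+\<omega>. ennreal ((G \<omega> - Z \<omega>)\<^sup>2) \<partial>M) = ennreal R"
        by (cases "(\<integral>\<^sup>+\<omega>. ennreal ((G \<omega> - Z \<omega>)\<^sup>2) \<partial>M)" rule: ennreal_cases) auto
      define W where "W \<omega> = G \<omega> - Z \<omega>" for \<omega>
      have Wm[measurable]: "W \<in> borel_measurable M" unfolding W_def[abs_def] by measurable
      have iW2: "integrable M (\<lambda>\<omega>. (W \<omega>)\<^sup>2)"
        by (rule integrableI_nn_integral_finite[where x = R]) (use R in \<open>auto simp: W_def\<close>)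
      have risk2: "(\<integral>\<^sup>+\<omega>. ennreal ((G \<omega> - Z \<omega>)\<^sup>2) \<partial>M) = ennreal (expectation (\<lambda>\<omega>. (W \<omega>)\<^sup>2))"
        unfolding W_def by (rule nn_integral_eq_integral) (use iW2 in \<open>auto simp: W_def\<close>)
      have iZ2: "integrable M (\<lambda>\<omega>. (Z \<omega>)\<^sup>2)" by (simp add: Z_def lci2)
      have iG2: "integrable M (\<lambda>\<omega>. (G \<omega>)\<^sup>2)"
      proof (rule Bochner_Integration.integrable_bound[of _ "\<lambda>\<omega>. 2 * (W \<omega>)\<^sup>2 + 2 * (Z \<omega>)\<^sup>2"])
        show "integrable M (\<lambda>\<omega>. 2 * (W \<omega>)\<^sup>2 + 2 * (Z \<omega>)\<^sup>2)" using iW2 iZ2 by auto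
        show "AE \<omega> in M. norm ((G \<omega>)\<^sup>2) \<le> norm (2 * (W \<omega>)\<^sup>2 + 2 * (Z \<omega>)\<^sup>2)"
        proof (intro AE_I2)
          fix \<omega>
          have "(G \<omega>)\<^sup>2 \<le> 2 * (W \<omega>)\<^sup>2 + 2 * (Z \<omega>)\<^sup>2"
            using sum_squares_ge_zero[of "W \<omega> - Z \<omega>" 0] by (simp add: W_def power2_eq_square algebra_simps)
          thus "norm ((G \<omega>)\<^sup>2) \<le> norm (2 * (W \<omega>)\<^sup>2 + 2 * (Z \<omega>)\<^sup>2)" by simp
        qed
      qed measurable
      have iDG: "integrable M (\<lambda>\<omega>. D \<omega> * G \<omega>)" by (rule prod_int) (use Di2 iG2 in auto)
      have iZD: "integrable M (\<lambda>\<omega>. Z \<omega> * D \<omega>)" by (rule prod_int) (use Di2 iZ2 in auto)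
      have iWD: "integrable M (\<lambda>\<omega>. W \<omega> * D \<omega>)" by (rule prod_int) (use Di2 iW2 in auto)
      have EDG: "expectation (\<lambda>\<omega>. D \<omega> * G \<omega>) = 0"
      proof -
        define gt where "gt m x = max (- real m) (min (real m) (g x))" for m :: nat and x
        have gtm: "gt m \<in> borel_measurable (PiM K (\<lambda>_. borel))" for m unfolding gt_def[abs_def] by measurable
        have gtb: "\<bar>gt m x\<bar> \<le> real m" for m x by (auto simp: gt_def)
        have z: "expectation (\<lambda>\<omega>. D \<omega> * gt m (F \<omega>)) = 0" for m
          using orth[OF gtm gtb] by (simp add: F_def)
        have "(\<lambda>m. expectation (\<lambda>\<omega>. D \<omega> * gt m (F \<omega>))) \<longlonglongrightarrow> expectation (\<lambda>\<omega>. D \<omega> * G \<omega>)"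
        proof (rule integral_dominated_convergence[where w = "\<lambda>\<omega>. \<bar>D \<omega> * G \<omega>\<bar>"])
          show "(\<lambda>\<omega>. D \<omega> * G \<omega>) \<in> borel_measurable M" by measurable
          show "(\<lambda>\<omega>. D \<omega> * gt m (F \<omega>)) \<in> borel_measurable M" for m
            using gtm[of m] by measurable
          show "integrable M (\<lambda>\<omega>. \<bar>D \<omega> * G \<omega>\<bar>)" using iDG by auto
          show "AE \<omega> in M. (\<lambda>m. D \<omega> * gt m (F \<omega>)) \<longlonglongrightarrow> D \<omega> * G \<omega>"
          proof (intro AE_I2 tendsto_mult_left tendsto_eventually eventually_sequentiallyI)
            fix \<omega> m assume "nat \<lceil>\<bar>G \<omega>\<bar>\<rceil> \<le> m"
            hence "\<bar>G \<omega>\<bar> \<le> real m" by linarith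
            thus "gt m (F \<omega>) = G \<omega>" by (auto simp: gt_def G_def)
          qed
          show "AE \<omega> in M. norm (D \<omega> * gt m (F \<omega>)) \<le> \<bar>D \<omega> * G \<omega>\<bar>" for m
            by (intro AE_I2) (auto simp: gt_def G_def abs_mult intro!: mult_left_mono)
        qed
        hence "(\<lambda>m. 0::real) \<longlonglongrightarrow> expectation (\<lambda>\<omega>. D \<omega> * G \<omega>)" by (simp add: z)
        thus ?thesis using LIMSEQ_unique[OF tendsto_const] by metis
      qed
      have EZD: "expectation (\<lambda>\<omega>. Z \<omega> * D \<omega>) = real (card r)"
      proof -
        have "expectation (\<lambda>\<omega>. (lc z \<omega> - expectation (lc z)) * (lc d \<omega> - expectation (lc d))) = real (card r)"
          using cov[of z d] Qzd by simp
        moreover have "expectation (\<lambda>\<omega>. (lc z \<omega> - expectation (lc z)) * (lc d \<omega> - expectation (lc d)))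
            = expectation (\<lambda>\<omega>. Z \<omega> * D \<omega> - expectation (lc z) * D \<omega>)"
          by (rule Bochner_Integration.integral_cong) (auto simp: Z_def D_def algebra_simps)
        moreover have "\<dots> = expectation (\<lambda>\<omega>. Z \<omega> * D \<omega>) - expectation (lc z) * expectation D"
          using iZD Di by simp
        ultimately show ?thesis using ED0 by simp
      qed
      have EWD: "expectation (\<lambda>\<omega>. W \<omega> * D \<omega>) = - real (card r)"
      proof -
        have "expectation (\<lambda>\<omega>. W \<omega> * D \<omega>) = expectation (\<lambda>\<omega>. D \<omega> * G \<omega> - Z \<omega> * D \<omega>)"
          by (rule Bochner_Integration.integral_cong) (auto simp: W_def algebra_simps)
        also have "\<dots> = expectation (\<lambda>\<omega>. D \<omega> * G \<omega>) - expectation (\<lambda>\<omega>. Z \<omega> * D \<omega>)" using iDG iZD by simp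
        finally show ?thesis using EDG EZD by simp
      qed
      have ED2: "expectation (\<lambda>\<omega>. (D \<omega>)\<^sup>2) \<le> den"
      proof -
        have "expectation (\<lambda>\<omega>. (D \<omega>)\<^sup>2) = Q d d"
          using cov[of d d] by (simp add: D_def power2_eq_square)
        thus ?thesis using Qdd_le by simp
      qed
      define c where "c = real (card r)"
      define lam where "lam = c / den"
      have "0 \<le> expectation (\<lambda>\<omega>. (W \<omega> + lam * D \<omega>)\<^sup>2)" by simp
      also have "\<dots> = expectation (\<lambda>\<omega>. (W \<omega>)\<^sup>2 + 2 * lam * (W \<omega> * D \<omega>) + lam\<^sup>2 * (D \<omega>)\<^sup>2)"
        by (rule Bochner_Integration.integral_cong) (auto simp: power2_eq_square algebra_simps)
      also have "\<dots> = expectation (\<lambda>\<omega>. (W \<omega>)\<^sup>2) + 2 * lam * expectation (\<lambda>\<omega>. W \<omega> * D \<omega>) + lam\<^sup>2 * expectation (\<lambda>\<omega>. (D \<omega>)\<^sup>2)"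
        using iW2 iWD Di2 by simp
      also have "\<dots> \<le> expectation (\<lambda>\<omega>. (W \<omega>)\<^sup>2) + 2 * lam * (- c) + lam\<^sup>2 * den"
        using EWD ED2 by (simp add: c_def mult_left_mono)
      finally have "2 * lam * c - lam\<^sup>2 * den \<le> expectation (\<lambda>\<omega>. (W \<omega>)\<^sup>2)" by simp
      moreover have "2 * lam * c - lam\<^sup>2 * den = c ^ 2 / den"
        using den_pos by (simp add: lam_def power2_eq_square field_simps)
      ultimately have "c ^ 2 / den \<le> expectation (\<lambda>\<omega>. (W \<omega>)\<^sup>2)" by simp
      thus ?thesis unfolding risk2 c_def by (rule ennreal_leI)
    qed
  qed
qed


end
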